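(* Let $d\ge2$, let $\{T(e)\}$ be i.i.d. on the edges of $\mathbb{Z}^d$ with values in $[0,\infty]$ and common law $\mathcal{L}$, assume $\mathcal{L}$ is useful, $\mathcal{L}([0,\infty))>p_c$, and that either (INF) $\mathcal{L}(\{\infty\})>0$, or (FU) $\mathcal{L}(\{\infty\})=0$ and the support of $\mathcal{L}$ is unbounded. Let $\mathfrak{P}_0=(\Lambda_0,u_0^\Lambda,v_0^\Lambda,\mathcal{A}_0^\Lambda)$ be a valid pattern. Then there exists a pattern $\mathfrak{P}=(\Lambda,u^\Lambda,v^\Lambda,\mathcal{A}^\Lambda)$ such that: (1) $\Lambda_0\subset\Lambda$; (2) $\mathbb{P}(\mathcal{A}^\Lambda)>0$; (3) on $\mathcal{A}^\Lambda$, every path from $u^\Lambda$ to $v^\Lambda$ that is optimal for the passage time among the paths entirely inside $\Lambda$ contains a subpath from $u_0^\Lambda$ to $v_0^\Lambda$ entirely inside $\Lambda_0$; (4) $\mathcal{A}^\Lambda\subset\mathcal{A}_0^\Lambda$; (5) in case (INF), $\mathfrak{P}$ satisfies: (AI-1) there is an integer $\ell\ge3$ with $\Lambda=B_\infty(0,\ell)$; (AI-2) $u^\Lambda=-\ell\epsilon_1$, $v^\Lambda=\ell\epsilon_1$; (AI-3) there exist a constant $T^\Lambda>0$ and a path $\pi_\infty$ from $u^\Lambda$ to $v^\Lambda$ inside $\Lambda$ such that $T(\pi_\infty)<T^\Lambda$ on $\mathcal{A}^\Lambda$; (AI-4) on $\mathcal{A}^\Lambda$, $\Lambda$ satisfies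 the boundary condition. In case (FU), $\mathfrak{P}$ satisfies: (AF-1) there is an integer $\ell>0$ with $\Lambda=B_\infty(0,\ell)$; (AF-2) $u^\Lambda=-\ell\epsilon_1$, $v^\Lambda=\ell\epsilon_1$; (AF-3) there is a constant $M^\Lambda$ such that on $\mathcal{A}^\Lambda$, every edge $e$ of $\Lambda$ that is not an edge of $\partial\Lambda$ has $T(e)\le M^\Lambda$; (AF-4) for every $M>0$, $\mathbb{P}(\mathcal{A}^\Lambda\cap\{\forall e\in\partial\Lambda,\ T(e)>M\})>0$.
   Context: An edge $e=\{u,v\}$ is said to belong to a vertex set if both $u,v$ do. For a vertex set $B$, $\partial B$ is the set of vertices of $B$ adjacent to a vertex outside $B$. $B_\infty(c,r)=\{u\in\mathbb{Z}^d:\|u-c\|_\infty\le r\}$; $\epsilon_1,\dots,\epsilon_d$ is the canonical basis. $p_c$ / $\overrightarrow{p_c}$: critical probabilities of Bernoulli / oriented Bernoulli bond percolation; $\mathcal{L}$ is useful if, with $t_{\min}$ the minimum of its support, $\mathcal{L}(\{t_{\min}\})<p_c$ when $t_{\min}=0$ and $<\overrightarrow{p_c}$ when $t_{\min}>0$. Passage time of a path is the sum of the passage times of its edges. A pattern $(\Lambda,u^\Lambda,v^\Lambda,\mathcal{A}^\Lambda)$ consists of a box $\Lambda$ (here $\Lambda_0=\prod_i\{0,\dots,L_i\}$ with integers $L_i\ge0$ not all zero, while $\Lambda$ may be a box $B_\infty(0,\ell)$ centered at $0$), two distinct vertices $u^\Lambda,v^\Lambda\in\partial\Lambda$, and an event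 $\mathcal{A}^\Lambda$ depending only on the passage times of edges of $\Lambda$. Valid pattern: $\mathbb{P}(\mathcal{A}^\Lambda)>0$; on $\mathcal{A}^\Lambda$ some path from $u^\Lambda$ to $v^\Lambda$ inside $\Lambda$ has finite passage time; and either $\mathcal{L}$ has unbounded support or there exist $\alpha\ne\alpha'$ in $\{\pm\epsilon_i\}$ with $u^\Lambda+\alpha\notin\Lambda$ and $v^\Lambda+\alpha'\notin\Lambda$. Boundary condition: for $s\in\mathbb{Z}^d$ and $\ell\ge3$, $\mathcal{S}_{s,\ell}$ is the set of edges of the straight path from $s-(\ell-1)\epsilon_1+(\ell-1)\epsilon_2$ to $s+(\ell-1)\epsilon_1+(\ell-1)\epsilon_2$ made of $2(\ell-1)$ steps in direction $\epsilon_1$. $B_\infty(s,\ell)$ satisfies the boundary condition if every edge $e$ belonging to $B_\infty(s,\ell)$ but not to $B_\infty(s,\ell-3)$ either belongs to $\mathcal{S}_{s,\ell}\cup(s+\mathbb{Z}\epsilon_1)$ and has $T(e)<\infty$, or has $T(e)=\infty$. *)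

theory Defs
  imports "HOL-Probability.Probability"
begin

definition Zd :: "nat \<Rightarrow> (nat \<Rightarrow> int) set" where
  "Zd d = {x. \<forall>i\<ge>d. x i = 0}"

definition uvec :: "nat \<Rightarrow> nat \<Rightarrow> int" where
  "uvec i = (\<lambda>j. if j = i then 1 else 0)"

definition vadd :: "(nat \<Rightarrow> int) \<Rightarrow> (nat \<Rightarrow> int) \<Rightarrow> nat \<Rightarrow> int" where
  "vadd x y = (\<lambda>k. x k + y k)"

definition vscale :: "int \<Rightarrow> (nat \<Rightarrow> int) \<Rightarrow> nat \<Rightarrow> int" where
  "vscale c x = (\<lambda>k. c * x k)"

definition adj :: "nat \<Rightarrow> (nat \<Rightarrow> int) \<Rightarrow> (nat \<Rightarrow> int) \<Rightarrow> bool" where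
  "adj d x y \<longleftrightarrow> x \<in> Zd d \<and> y \<in> Zd d \<and> (\<Sum>i<d. \<bar>x i - y i\<bar>) = 1"

definition edges :: "nat \<Rightarrow> (nat \<Rightarrow> int) set set" where
  "edges d = {{x, y} | x y. adj d x y}"

definition edges_of :: "nat \<Rightarrow> (nat \<Rightarrow> int) set \<Rightarrow> (nat \<Rightarrow> int) set set" where
  "edges_of d B = {e \<in> edges d. e \<subseteq> B}"

definition vboundary :: "nat \<Rightarrow> (nat \<Rightarrow> int) set \<Rightarrow> (nat \<Rightarrow> int) set" where
  "vboundary d B = {x \<in> B. \<exists>y. adj d x y \<and> y \<notin> B}"

definition ball_inf :: "nat \<Rightarrow> (nat \<Rightarrow> int) \<Rightarrow> int \<Rightarrow> (nat \<Rightarrow> int) set" where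
  "ball_inf d c r = {x \<in> Zd d. \<forall>i<d. \<bar>x i - c i\<bar> \<le> r}"

definition is_box :: "nat \<Rightarrow> (nat \<Rightarrow> int) set \<Rightarrow> bool" where
  "is_box d B \<longleftrightarrow> (\<exists>a b. (\<forall>i<d. a i \<le> b i) \<and>
      B = {x \<in> Zd d. \<forall>i<d. a i \<le> x i \<and> x i \<le> b i})"

definition box0 :: "nat \<Rightarrow> (nat \<Rightarrow> nat) \<Rightarrow> (nat \<Rightarrow> int) set" where
  "box0 d Ls = {x \<in> Zd d. \<forall>i<d. 0 \<le> x i \<and> x i \<le> int (Ls i)}"

definition is_path :: "nat \<Rightarrow> (nat \<Rightarrow> int) list \<Rightarrow> bool" where
  "is_path d \<pi> \<longleftrightarrow> \<pi> \<noteq> [] \<and> successively (adj d) \<pi>"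

definition path_from :: "nat \<Rightarrow> (nat \<Rightarrow> int) list \<Rightarrow> (nat \<Rightarrow> int) \<Rightarrow> (nat \<Rightarrow> int) \<Rightarrow> bool" where
  "path_from d \<pi> u v \<longleftrightarrow> is_path d \<pi> \<and> hd \<pi> = u \<and> last \<pi> = v"

definition passage :: "((nat \<Rightarrow> int) set \<Rightarrow> ennreal) \<Rightarrow> (nat \<Rightarrow> int) list \<Rightarrow> ennreal" where
  "passage \<omega> \<pi> = (\<Sum>i<length \<pi> - 1. \<omega> {\<pi> ! i, \<pi> ! Suc i})"

definition optimal_in :: "nat \<Rightarrow> ((nat \<Rightarrow> int) set \<Rightarrow> ennreal) \<Rightarrow> (nat \<Rightarrow> int) set
    \<Rightarrow> (nat \<Rightarrow> int) \<Rightarrow> (nat \<Rightarrow> int) \<Rightarrow> (nat \<Rightarrow> int) list \<Rightarrow> bool" where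
  "optimal_in d \<omega> B u v \<pi> \<longleftrightarrow> path_from d \<pi> u v \<and> set \<pi> \<subseteq> B \<and>
     (\<forall>\<pi>'. path_from d \<pi>' u v \<and> set \<pi>' \<subseteq> B \<longrightarrow> passage \<omega> \<pi> \<le> passage \<omega> \<pi>')"

definition has_subpath :: "nat \<Rightarrow> (nat \<Rightarrow> int) list \<Rightarrow> (nat \<Rightarrow> int) set
    \<Rightarrow> (nat \<Rightarrow> int) \<Rightarrow> (nat \<Rightarrow> int) \<Rightarrow> bool" where
  "has_subpath d \<pi> B u v \<longleftrightarrow>
     (\<exists>xs ys zs. \<pi> = xs @ ys @ zs \<and> path_from d ys u v \<and> set ys \<subseteq> B)"

definition FPP :: "nat \<Rightarrow> ennreal measure \<Rightarrow> ((nat \<Rightarrow> int) set \<Rightarrow> ennreal) measure" where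
  "FPP d L = PiM (edges d) (\<lambda>_. L)"

definition local_event :: "nat \<Rightarrow> ennreal measure \<Rightarrow> (nat \<Rightarrow> int) set
    \<Rightarrow> ((nat \<Rightarrow> int) set \<Rightarrow> ennreal) set \<Rightarrow> bool" where
  "local_event d L B A \<longleftrightarrow> A \<in> sets (FPP d L) \<and>
     (\<forall>\<omega>\<in>space (FPP d L). \<forall>\<omega>'\<in>space (FPP d L).
        (\<forall>e\<in>edges_of d B. \<omega> e = \<omega>' e) \<longrightarrow> (\<omega> \<in> A \<longleftrightarrow> \<omega>' \<in> A))"

definition Bern :: "nat \<Rightarrow> real \<Rightarrow> ((nat \<Rightarrow> int) set \<Rightarrow> bool) measure" where
  "Bern d p = PiM (edges d) (\<lambda>_. measure_pmf (bernoulli_pmf p))"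

definition cluster :: "nat \<Rightarrow> ((nat \<Rightarrow> int) set \<Rightarrow> bool) \<Rightarrow> (nat \<Rightarrow> int) set" where
  "cluster d \<omega> = {y. (\<lambda>x y. adj d x y \<and> \<omega> {x, y})\<^sup>*\<^sup>* (\<lambda>_. 0) y}"

definition ocluster :: "nat \<Rightarrow> ((nat \<Rightarrow> int) set \<Rightarrow> bool) \<Rightarrow> (nat \<Rightarrow> int) set" where
  "ocluster d \<omega> = {y. (\<lambda>x y. (\<exists>i<d. y = vadd x (uvec i)) \<and> x \<in> Zd d \<and> \<omega> {x, y})\<^sup>*\<^sup>* (\<lambda>_. 0) y}"

definition p_c :: "nat \<Rightarrow> real" where
  "p_c d = Sup {p \<in> {0..1}. measure (Bern d p) {\<omega> \<in> space (Bern d p). infinite (cluster d \<omega>)} = 0}"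

definition oriented_p_c :: "nat \<Rightarrow> real" where
  "oriented_p_c d = Sup {p \<in> {0..1}. measure (Bern d p) {\<omega> \<in> space (Bern d p). infinite (ocluster d \<omega>)} = 0}"

definition law_support :: "ennreal measure \<Rightarrow> ennreal set" where
  "law_support L = {x. \<forall>U. open U \<and> x \<in> U \<longrightarrow> emeasure L U > 0}"

definition t_min :: "ennreal measure \<Rightarrow> ennreal" where
  "t_min L = Inf (law_support L)"

definition useful :: "nat \<Rightarrow> ennreal measure \<Rightarrow> bool" where
  "useful d L \<longleftrightarrow> (t_min L = 0 \<longrightarrow> measure L {0} < p_c d) \<and>
                   (t_min L > 0 \<longrightarrow> measure L {t_min L} < oriented_p_c d)"

definition unbounded_support :: "ennreal measure \<Rightarrow> bool" where
  "unbounded_support L \<longleftrightarrow> (\<forall>M::real. \<exists>x\<in>law_support L. ennreal M < x \<and> x < \<infinity>)"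

definition pattern :: "nat \<Rightarrow> ennreal measure \<Rightarrow> (nat \<Rightarrow> int) set \<Rightarrow> (nat \<Rightarrow> int) \<Rightarrow> (nat \<Rightarrow> int)
    \<Rightarrow> ((nat \<Rightarrow> int) set \<Rightarrow> ennreal) set \<Rightarrow> bool" where
  "pattern d L B u v A \<longleftrightarrow> is_box d B \<and> u \<in> vboundary d B \<and> v \<in> vboundary d B \<and> u \<noteq> v
     \<and> local_event d L B A"

definition valid_pattern :: "nat \<Rightarrow> ennreal measure \<Rightarrow> (nat \<Rightarrow> int) set \<Rightarrow> (nat \<Rightarrow> int) \<Rightarrow> (nat \<Rightarrow> int)
    \<Rightarrow> ((nat \<Rightarrow> int) set \<Rightarrow> ennreal) set \<Rightarrow> bool" where
  "valid_pattern d L B u v A \<longleftrightarrow> pattern d L B u v A \<and>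
     measure (FPP d L) A > 0 \<and>
     (\<forall>\<omega>\<in>A. \<exists>\<pi>. path_from d \<pi> u v \<and> set \<pi> \<subseteq> B \<and> passage \<omega> \<pi> < \<infinity>) \<and>
     (unbounded_support L \<or>
      (\<exists>i<d. \<exists>j<d. \<exists>s\<in>{1,-1}. \<exists>t\<in>{1,-1}.
          vscale s (uvec i) \<noteq> vscale t (uvec j) \<and>
          vadd u (vscale s (uvec i)) \<notin> B \<and> vadd v (vscale t (uvec j)) \<notin> B))"

definition S_edges :: "(nat \<Rightarrow> int) \<Rightarrow> int \<Rightarrow> (nat \<Rightarrow> int) set set" where
  "S_edges s l = {{vadd s (vadd (vscale j (uvec 0)) (vscale (l - 1) (uvec 1))),
                   vadd s (vadd (vscale (j + 1) (uvec 0)) (vscale (l - 1) (uvec 1)))}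
                  | j. - (l - 1) \<le> j \<and> j \<le> l - 2}"

definition line1 :: "(nat \<Rightarrow> int) \<Rightarrow> (nat \<Rightarrow> int) set" where
  "line1 s = {vadd s (vscale k (uvec 0)) | k. True}"

definition boundary_condition :: "nat \<Rightarrow> ((nat \<Rightarrow> int) set \<Rightarrow> ennreal) \<Rightarrow> (nat \<Rightarrow> int) \<Rightarrow> int \<Rightarrow> bool" where
  "boundary_condition d \<omega> s l \<longleftrightarrow>
     (\<forall>e \<in> edges_of d (ball_inf d s l) - edges_of d (ball_inf d s (l - 3)).
        ((e \<in> S_edges s l \<or> e \<subseteq> line1 s) \<and> \<omega> e < \<infinity>) \<or> \<omega> e = \<infinity>)"

end

theory Submission
  imports Defs
begin

definition Bx :: "nat \<Rightarrow> (nat \<Rightarrow> int) \<Rightarrow> (nat \<Rightarrow> int) \<Rightarrow> (nat \<Rightarrow> int) set" where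
  "Bx d lo hi = {x \<in> Zd d. \<forall>i<d. lo i \<le> x i \<and> x i \<le> hi i}"

definition conn :: "nat \<Rightarrow> (nat \<Rightarrow> int) set \<Rightarrow> (nat \<Rightarrow> int) \<Rightarrow> (nat \<Rightarrow> int) \<Rightarrow> bool" where
  "conn d S = (\<lambda>a b. adj d a b \<and> a \<in> S \<and> b \<in> S)\<^sup>*\<^sup>*"

lemma Zd_upd: "x \<in> Zd d \<Longrightarrow> k < d \<Longrightarrow> x(k := z) \<in> Zd d"
  by (auto simp: Zd_def)

lemma adj_upd:
  assumes "x \<in> Zd d" "k < d" "s = 1 \<or> s = -1"
  shows "adj d x (x(k := x k + s))"
proof -
  have "(\<Sum>i<d. \<bar>x i - (x(k := x k + s)) i\<bar>) = (\<Sum>i<d. if i = k then 1 else 0)"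
    using assms(3) by (intro sum.cong) auto
  also have "\<dots> = 1" using assms(2) by simp
  finally show ?thesis using assms by (auto simp: adj_def Zd_upd)
qed

lemma adj_sym: "adj d x y \<Longrightarrow> adj d y x"
  unfolding adj_def by (auto simp: abs_minus_commute)

lemma adj_cases:
  assumes "adj d x y"
  shows "\<exists>k<d. \<exists>s. (s = 1 \<or> s = -1) \<and> y = x(k := x k + s)"
proof -
  have Z: "x \<in> Zd d" "y \<in> Zd d" and S: "(\<Sum>i<d. \<bar>x i - y i\<bar>) = 1"
    using assms by (auto simp: adj_def)
  have "\<exists>k<d. x k \<noteq> y k"
  proof (rule ccontr)
    assume "\<not> ?thesis"
    then have "(\<Sum>i<d. \<bar>x i - y i\<bar>) = 0" by (intro sum.neutral) auto
    with S show False by simp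
  qed
  then obtain k where k: "k < d" "x k \<noteq> y k" by auto
  have split: "(\<Sum>i<d. \<bar>x i - y i\<bar>) = \<bar>x k - y k\<bar> + (\<Sum>i\<in>{..<d} - {k}. \<bar>x i - y i\<bar>)"
    using k by (subst sum.remove[of _ k]) auto
  have ge: "\<bar>x k - y k\<bar> \<ge> 1" using k by auto
  have nn: "(\<Sum>i\<in>{..<d} - {k}. \<bar>x i - y i\<bar>) \<ge> 0" by (intro sum_nonneg) auto
  have e1: "\<bar>x k - y k\<bar> = 1" and e0: "(\<Sum>i\<in>{..<d} - {k}. \<bar>x i - y i\<bar>) = 0"
    using S split ge nn by linarith+
  have oth: "\<forall>i\<in>{..<d} - {k}. \<bar>x i - y i\<bar> = 0"
    using e0 by (subst (asm) sum_nonneg_eq_0_iff) auto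
  define s where "s = y k - x k"
  have s: "s = 1 \<or> s = -1" using e1 unfolding s_def by linarith
  have "y = x(k := x k + s)"
  proof
    fix i show "y i = (x(k := x k + s)) i"
    proof (cases "i = k")
      case True then show ?thesis by (simp add: s_def)
    next
      case False
      show ?thesis
      proof (cases "i < d")
        case True with oth False show ?thesis by auto
      next
        case False2: False
        with Z False show ?thesis by (auto simp: Zd_def)
      qed
    qed
  qed
  with k s show ?thesis by blast
qed

lemma adj_neq: "adj d x y \<Longrightarrow> x \<noteq> y"
  unfolding adj_def by auto

lemma adj_Zd: "adj d x y \<Longrightarrow> x \<in> Zd d \<and> y \<in> Zd d"
  unfolding adj_def by auto

lemma adj_edge: "adj d x y \<Longrightarrow> {x, y} \<in> edges d"
  unfolding edges_def by auto

lemma conn_refl: "conn d S x x" unfolding conn_def by simp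

lemma conn_trans: "conn d S x y \<Longrightarrow> conn d S y z \<Longrightarrow> conn d S x z"
  unfolding conn_def by (rule rtranclp_trans)

lemma conn_step: "adj d x y \<Longrightarrow> x \<in> S \<Longrightarrow> y \<in> S \<Longrightarrow> conn d S x y"
  unfolding conn_def by auto

lemma conn_sym: "conn d S x y \<Longrightarrow> conn d S y x"
  unfolding conn_def
proof (induction rule: rtranclp_induct)
  case base then show ?case by simp
next
  case (step y z)
  then have zy: "(\<lambda>a b. adj d a b \<and> a \<in> S \<and> b \<in> S) z y" by (auto intro: adj_sym)
  show ?case by (rule converse_rtranclp_into_rtranclp[OF zy step.IH])
qed

lemma conn_mono: "conn d S x y \<Longrightarrow> S \<subseteq> T \<Longrightarrow> conn d T x y"
  unfolding conn_def
  by (induction rule: rtranclp_induct) (auto intro: rtranclp.rtrancl_into_rtrancl)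

lemma conn_path:
  assumes "conn d S x y" "x \<in> S"
  shows "\<exists>\<pi>. path_from d \<pi> x y \<and> set \<pi> \<subseteq> S"
  using assms unfolding conn_def
proof (induction rule: converse_rtranclp_induct)
  case base
  then show ?case by (intro exI[of _ "[y]"]) (auto simp: path_from_def is_path_def)
next
  case (step x z)
  then obtain \<pi> where \<pi>: "path_from d \<pi> z y" "set \<pi> \<subseteq> S" by auto
  then have "path_from d (x # \<pi>) x y"
    using step(1) by (cases \<pi>) (auto simp: path_from_def is_path_def)
  with \<pi> step(1) show ?case by (intro exI[of _ "x # \<pi>"]) auto
qed

lemma slide:
  assumes "p \<in> Zd d" "k < d" "\<forall>t::nat. t \<le> n \<longrightarrow> p(k := p k + int t) \<in> S"
  shows "conn d S p (p(k := p k + int n))"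
  using assms(3)
proof (induction n)
  case 0
  then show ?case by (simp add: conn_refl)
next
  case (Suc n)
  have "\<forall>t::nat. t \<le> n \<longrightarrow> p(k := p k + int t) \<in> S" using Suc.prems le_SucI by blast
  note IH = Suc.IH[OF this]
  have a: "adj d (p(k := p k + int n)) (p(k := p k + int (Suc n)))"
    using adj_upd[of "p(k := p k + int n)" d k 1] assms(1,2) Zd_upd by (auto simp: algebra_simps)
  have "p(k := p k + int n) \<in> S" "p(k := p k + int (Suc n)) \<in> S"
    using Suc.prems[rule_format, of n] Suc.prems[rule_format, of "Suc n"] by (auto simp: fun_upd_def)
  with IH a show ?case by (meson conn_step conn_trans)
qed

lemma segment:
  assumes "p \<in> Zd d" "k < d"
    and "\<And>z. min (p k) w \<le> z \<Longrightarrow> z \<le> max (p k) w \<Longrightarrow> p(k := z) \<in> S"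
  shows "conn d S p (p(k := w))"
proof (cases "p k \<le> w")
  case True
  have "conn d S p (p(k := p k + int (nat (w - p k))))"
    by (rule slide[OF assms(1,2)]) (use True in \<open>auto intro!: assms(3)\<close>)
  then show ?thesis using True by simp
next
  case False
  define q where "q = p(k := w)"
  have q: "q \<in> Zd d" using assms by (simp add: q_def Zd_upd)
  have "conn d S q (q(k := q k + int (nat (p k - w))))"
  proof (rule slide[OF q assms(2)], intro allI impI)
    fix t :: nat assume "t \<le> nat (p k - w)"
    then show "q(k := q k + int t) \<in> S" using False
      by (auto simp: q_def intro!: assms(3))
  qed
  moreover have "q(k := q k + int (nat (p k - w))) = p" using False
    by (auto simp: q_def)
  ultimately show ?thesis by (auto simp: q_def intro: conn_sym)
qed

lemma Bx_conn:
  assumes "x \<in> Bx d lo hi" "y \<in> Bx d lo hi"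
  shows "conn d (Bx d lo hi) x y"
proof -
  define z where "z k = (\<lambda>i. if i < k then y i else x i)" for k
  have xz: "x \<in> Zd d" "y \<in> Zd d" using assms by (auto simp: Bx_def)
  have "k \<le> d \<Longrightarrow> conn d (Bx d lo hi) x (z k)" for k
  proof (induction k)
    case 0 then show ?case by (simp add: z_def conn_refl)
  next
    case (Suc k)
    then have IH: "conn d (Bx d lo hi) x (z k)" by simp
    have zk: "z k \<in> Zd d" using xz by (auto simp: z_def Zd_def)
    have eq: "z (Suc k) = (z k)(k := y k)" by (auto simp: z_def)
    have "conn d (Bx d lo hi) (z k) ((z k)(k := y k))"
    proof (rule segment[OF zk])
      show "k < d" using Suc by simp
      fix w assume w: "min (z k k) (y k) \<le> w" "w \<le> max (z k k) (y k)"
      have bnd: "lo k \<le> x k" "x k \<le> hi k" "lo k \<le> y k" "y k \<le> hi k"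
        using assms Suc.prems by (auto simp: Bx_def)
      have wb: "lo k \<le> w" "w \<le> hi k" using bnd w unfolding z_def by (auto simp: min_def max_def split: if_splits)
      show "(z k)(k := w) \<in> Bx d lo hi"
        using assms wb Suc.prems zk by (auto simp: Bx_def z_def Zd_def)
    qed
    with IH eq show ?case by (metis conn_trans)
  qed
  from this[of d] have "conn d (Bx d lo hi) x (z d)" by simp
  moreover have "z d = y" using xz by (auto simp: z_def Zd_def)
  ultimately show ?thesis by simp
qed


lemma walk_aux:
  assumes disj: "C1 \<inter> C2 = {}" "C1 \<inter> Q = {}" "C2 \<inter> Q = {}"
    and mem: "a \<in> Q" "a' \<in> C1" "b \<in> Q" "b' \<in> C2"
    and R: "\<And>x y. R x y \<Longrightarrow> (x\<in>C1 \<and> y\<in>C1) \<or> (x\<in>C2 \<and> y\<in>C2) \<or> (x\<in>Q \<and> y\<in>Q) \<or>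
             (x = a \<and> y = a') \<or> (x = a' \<and> y = a) \<or> (x = b \<and> y = b') \<or> (x = b' \<and> y = b)"
  shows "successively R \<pi> \<Longrightarrow> \<pi> \<noteq> [] \<Longrightarrow> last \<pi> \<in> C2 \<Longrightarrow>
     (hd \<pi> \<in> C1 \<longrightarrow> (\<exists>xs ys zs. \<pi> = xs @ ys @ zs \<and> ys \<noteq> [] \<and> hd ys = a \<and> last ys = b \<and> set ys \<subseteq> Q)) \<and>
     (hd \<pi> \<in> Q \<longrightarrow> (\<exists>xs ys zs. \<pi> = xs @ ys @ zs \<and> ys \<noteq> [] \<and> hd ys = a \<and> last ys = b \<and> set ys \<subseteq> Q) \<or>
        (\<exists>ys zs. \<pi> = ys @ zs \<and> ys \<noteq> [] \<and> last ys = b \<and> set ys \<subseteq> Q))"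
proof (induction \<pi>)
  case Nil then show ?case by simp
next
  case (Cons x rest)
  show ?case
  proof (cases rest)
    case Nil
    then have "x \<in> C2" using Cons.prems by simp
    then show ?thesis using disj Nil by auto
  next
    case (Cons y t)
    have Rxy: "R x y" and sr: "successively R rest" using Cons.prems \<open>rest = y # t\<close> by auto
    have lr: "last rest \<in> C2" using Cons.prems \<open>rest = y # t\<close> by auto
    have IH: "(y \<in> C1 \<longrightarrow> (\<exists>xs ys zs. rest = xs @ ys @ zs \<and> ys \<noteq> [] \<and> hd ys = a \<and> last ys = b \<and> set ys \<subseteq> Q)) \<and>
     (y \<in> Q \<longrightarrow> (\<exists>xs ys zs. rest = xs @ ys @ zs \<and> ys \<noteq> [] \<and> hd ys = a \<and> last ys = b \<and> set ys \<subseteq> Q) \<or>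
        (\<exists>ys zs. rest = ys @ zs \<and> ys \<noteq> [] \<and> last ys = b \<and> set ys \<subseteq> Q))"
      using Cons.IH[OF sr _ lr] \<open>rest = y # t\<close> by simp
    have lift: "\<exists>xs ys zs. x # rest = xs @ ys @ zs \<and> ys \<noteq> [] \<and> hd ys = a \<and> last ys = b \<and> set ys \<subseteq> Q"
      if "\<exists>xs ys zs. rest = xs @ ys @ zs \<and> ys \<noteq> [] \<and> hd ys = a \<and> last ys = b \<and> set ys \<subseteq> Q"
    proof -
      from that obtain xs ys zs where "rest = xs @ ys @ zs" "ys \<noteq> []" "hd ys = a" "last ys = b" "set ys \<subseteq> Q"
        by blast
      then show ?thesis by (intro exI[of _ "x # xs"] exI[of _ ys] exI[of _ zs]) auto
    qed
    show ?thesis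
    proof (intro conjI impI)
      assume x1: "hd (x # rest) \<in> C1"
      then have xC1: "x \<in> C1" by simp
      from R[OF Rxy] xC1 disj mem
      have "y \<in> C1 \<or> (x = a' \<and> y = a)" by auto
      then show "\<exists>xs ys zs. x # rest = xs @ ys @ zs \<and> ys \<noteq> [] \<and> hd ys = a \<and> last ys = b \<and> set ys \<subseteq> Q"
      proof
        assume "y \<in> C1" with IH lift show ?thesis by blast
      next
        assume xy: "x = a' \<and> y = a"
        then have "y \<in> Q" using mem by simp
        with IH have "(\<exists>xs ys zs. rest = xs @ ys @ zs \<and> ys \<noteq> [] \<and> hd ys = a \<and> last ys = b \<and> set ys \<subseteq> Q) \<or>
          (\<exists>ys zs. rest = ys @ zs \<and> ys \<noteq> [] \<and> last ys = b \<and> set ys \<subseteq> Q)" by blast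
        then show ?thesis
        proof
          assume "\<exists>xs ys zs. rest = xs @ ys @ zs \<and> ys \<noteq> [] \<and> hd ys = a \<and> last ys = b \<and> set ys \<subseteq> Q"
          with lift show ?thesis by blast
        next
          assume "\<exists>ys zs. rest = ys @ zs \<and> ys \<noteq> [] \<and> last ys = b \<and> set ys \<subseteq> Q"
          then obtain ys zs where yz: "rest = ys @ zs" "ys \<noteq> []" "last ys = b" "set ys \<subseteq> Q" by blast
          have "hd ys = a" using yz \<open>rest = y # t\<close> xy by (cases ys) auto
          with yz show ?thesis by (intro exI[of _ "[x]"] exI[of _ ys] exI[of _ zs]) auto
        qed
      qed
    next
      assume x1: "hd (x # rest) \<in> Q"
      then have xQ: "x \<in> Q" by simp
      show "(\<exists>xs ys zs. x # rest = xs @ ys @ zs \<and> ys \<noteq> [] \<and> hd ys = a \<and> last ys = b \<and> set ys \<subseteq> Q) \<or>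
        (\<exists>ys zs. x # rest = ys @ zs \<and> ys \<noteq> [] \<and> last ys = b \<and> set ys \<subseteq> Q)"
      proof (cases "x = b")
        case True
        then show ?thesis using xQ by (intro disjI2 exI[of _ "[x]"] exI[of _ rest]) auto
      next
        case False
        from R[OF Rxy] xQ disj mem False
        have "y \<in> Q \<or> (x = a \<and> y = a')" by auto
        then show ?thesis
        proof
          assume yQ: "y \<in> Q"
          with IH have "(\<exists>xs ys zs. rest = xs @ ys @ zs \<and> ys \<noteq> [] \<and> hd ys = a \<and> last ys = b \<and> set ys \<subseteq> Q) \<or>
            (\<exists>ys zs. rest = ys @ zs \<and> ys \<noteq> [] \<and> last ys = b \<and> set ys \<subseteq> Q)" by blast
          then show ?thesis
          proof
            assume "\<exists>xs ys zs. rest = xs @ ys @ zs \<and> ys \<noteq> [] \<and> hd ys = a \<and> last ys = b \<and> set ys \<subseteq> Q"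
            with lift show ?thesis by blast
          next
            assume "\<exists>ys zs. rest = ys @ zs \<and> ys \<noteq> [] \<and> last ys = b \<and> set ys \<subseteq> Q"
            then obtain ys zs where yz: "rest = ys @ zs" "ys \<noteq> []" "last ys = b" "set ys \<subseteq> Q" by blast
            then show ?thesis using xQ by (intro disjI2 exI[of _ "x # ys"] exI[of _ zs]) auto
          qed
        next
          assume "x = a \<and> y = a'"
          then have "y \<in> C1" using mem by simp
          with IH lift show ?thesis by blast
        qed
      qed
    qed
  qed
qed

lemma walk:
  assumes disj: "C1 \<inter> C2 = {}" "C1 \<inter> Q = {}" "C2 \<inter> Q = {}"
    and mem: "a \<in> Q" "a' \<in> C1" "b \<in> Q" "b' \<in> C2"
    and R: "\<And>x y. R x y \<Longrightarrow> (x\<in>C1 \<and> y\<in>C1) \<or> (x\<in>C2 \<and> y\<in>C2) \<or> (x\<in>Q \<and> y\<in>Q) \<or>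
             (x = a \<and> y = a') \<or> (x = a' \<and> y = a) \<or> (x = b \<and> y = b') \<or> (x = b' \<and> y = b)"
    and "successively R \<pi>" "\<pi> \<noteq> []" "last \<pi> \<in> C2" "hd \<pi> \<in> C1"
  shows "\<exists>xs ys zs. \<pi> = xs @ ys @ zs \<and> ys \<noteq> [] \<and> hd ys = a \<and> last ys = b \<and> set ys \<subseteq> Q"
  using walk_aux[OF assms(1-8), of R \<pi>] assms(9-) R by blast

lemma passage_single[simp]: "passage \<omega> [x] = 0"
  by (simp add: passage_def)

lemma passage_Cons2: "passage \<omega> (x # y # zs) = \<omega> {x, y} + passage \<omega> (y # zs)"
  unfolding passage_def by (simp add: sum.lessThan_Suc_shift del: sum.lessThan_Suc)

lemma passage_append:
  "xs \<noteq> [] \<Longrightarrow> ys \<noteq> [] \<Longrightarrow> passage \<omega> (xs @ ys) = passage \<omega> xs + \<omega> {last xs, hd ys} + passage \<omega> ys"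
proof (induction xs)
  case Nil then show ?case by simp
next
  case (Cons x xs)
  show ?case
  proof (cases xs)
    case Nil
    then show ?thesis using Cons.prems by (cases ys) (auto simp: passage_Cons2)
  next
    case (Cons y t)
    then show ?thesis using Cons.IH Cons.prems
      by (simp add: passage_Cons2 add.assoc)
  qed
qed

lemma passage_ge_edge:
  assumes "Suc i < length \<pi>"
  shows "\<omega> {\<pi> ! i, \<pi> ! Suc i} \<le> passage \<omega> \<pi>"
  unfolding passage_def
  by (rule member_le_sum) (use assms in auto)

lemma passage_bound:
  assumes "\<And>i. Suc i < length \<pi> \<Longrightarrow> \<omega> {\<pi> ! i, \<pi> ! Suc i} \<le> c"
  shows "passage \<omega> \<pi> \<le> of_nat (length \<pi> - 1) * c"
  unfolding passage_def
  using sum_bounded_above[of "{..<length \<pi> - 1}" "\<lambda>i. \<omega> {\<pi> ! i, \<pi> ! Suc i}" c] assms by auto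

lemma path_adj: "path_from d \<pi> x y \<Longrightarrow> Suc i < length \<pi> \<Longrightarrow> adj d (\<pi> ! i) (\<pi> ! Suc i)"
  unfolding path_from_def is_path_def using successively_nth by blast

lemma path_len2: "path_from d \<pi> x y \<Longrightarrow> x \<noteq> y \<Longrightarrow> Suc 0 < length \<pi>"
  unfolding path_from_def is_path_def by (cases \<pi>) auto

lemma path_append3:
  assumes "path_from d p1 x1 y1" "path_from d p2 x2 y2" "path_from d p3 x3 y3"
    "adj d y1 x2" "adj d y2 x3"
  shows "path_from d (p1 @ p2 @ p3) x1 y3"
  using assms unfolding path_from_def is_path_def
  by (auto simp: successively_append_iff)

lemma path_infix: "path_from d (xs @ ys @ zs) x y \<Longrightarrow> ys \<noteq> [] \<Longrightarrow> is_path d ys"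
  unfolding path_from_def is_path_def by (auto simp: successively_append_iff)


definition fv :: "(nat \<Rightarrow> int) \<Rightarrow> nat \<Rightarrow> bool \<Rightarrow> int" where
  "fv Li k t = (if t then Li k + 1 else -1)"

definition ex_pt :: "nat \<Rightarrow> (nat \<Rightarrow> int) \<Rightarrow> (nat \<Rightarrow> int) \<Rightarrow> nat \<Rightarrow> bool \<Rightarrow> (nat \<Rightarrow> int) \<Rightarrow> bool" where
  "ex_pt d Li a i s a' \<longleftrightarrow> a \<in> Bx d (\<lambda>_. 0) Li \<and> i < d \<and> a i = (if s then Li i else 0) \<and> a' = a(i := fv Li i s)"

lemma Bx_D: "x \<in> Bx d lo hi \<Longrightarrow> i < d \<Longrightarrow> lo i \<le> x i \<and> x i \<le> hi i"
  unfolding Bx_def by auto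

lemma Bx_Zd: "x \<in> Bx d lo hi \<Longrightarrow> x \<in> Zd d"
  unfolding Bx_def by auto

lemma Bx_I: "x \<in> Zd d \<Longrightarrow> (\<And>i. i < d \<Longrightarrow> lo i \<le> x i \<and> x i \<le> hi i) \<Longrightarrow> x \<in> Bx d lo hi"
  unfolding Bx_def by auto


locale geo =
  fixes d :: nat and Li :: "nat \<Rightarrow> int"
  assumes d2: "2 \<le> d" and Lpos: "\<And>i. 0 \<le> Li i"
begin

lemma fv_out: "fv Li k t < 0 \<or> fv Li k t > Li k"
  using Lpos[of k] by (auto simp: fv_def)

lemma fv_inj: "fv Li k t = fv Li k t' \<longleftrightarrow> t = t'"
  using Lpos[of k] by (auto simp: fv_def)

lemma fv_rng: "-1 \<le> fv Li k t \<and> fv Li k t \<le> Li k + 1"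
  using Lpos[of k] by (auto simp: fv_def)

abbreviation "Q \<equiv> Bx d (\<lambda>_. 0) Li"
abbreviation "E1 \<equiv> Bx d (\<lambda>_. -1) (\<lambda>i. Li i + 1)"

lemma ex_props:
  assumes "ex_pt d Li a i s a'"
  shows "a' \<in> Zd d" "a' i = fv Li i s" "\<And>k. k \<noteq> i \<Longrightarrow> a' k = a k" "i < d"
    "a \<in> Q" "a' \<in> E1" "a' \<notin> Q" "adj d a a'"
proof -
  have a: "a \<in> Q" "i < d" "a i = (if s then Li i else 0)" "a' = a(i := fv Li i s)"
    using assms by (auto simp: ex_pt_def)
  show Z: "a' \<in> Zd d" using a Bx_Zd Zd_upd by metis
  show "a' i = fv Li i s" "\<And>k. k \<noteq> i \<Longrightarrow> a' k = a k" "i < d" "a \<in> Q" using a by auto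
  show "a' \<in> E1"
  proof (rule Bx_I[OF Z])
    fix k assume "k < d"
    then show "-1 \<le> a' k \<and> a' k \<le> Li k + 1"
      using a Bx_D[OF a(1) \<open>k < d\<close>] fv_rng by (cases "k = i") auto
  qed
  show "a' \<notin> Q" using Bx_D[of a' d "\<lambda>_. 0" Li i] a fv_out[of i s] by auto
  have "a' = a(i := a i + (if s then 1 else -1))" using a by (auto simp: fv_def)
  then show "adj d a a'" using adj_upd[of a d i] a Bx_Zd by (metis)
qed

lemma ex_neq:
  assumes "ex_pt d Li a i s a'" "ex_pt d Li b j t b'" "a \<noteq> b"
  shows "a' \<noteq> b'"
proof
  assume eq: "a' = b'"
  note A = ex_props[OF assms(1)] and B = ex_props[OF assms(2)]
  have ij: "i = j"
  proof (rule ccontr)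
    assume "i \<noteq> j"
    then have "b' i = b i" using B by auto
    moreover have "0 \<le> b i \<and> b i \<le> Li i" using Bx_D[OF B(5) A(4)] by simp
    ultimately show False using eq A(2) fv_out[of i s] by auto
  qed
  then have st: "s = t" using eq A(2) B(2) fv_inj by metis
  have "a = b"
  proof
    fix k show "a k = b k"
    proof (cases "k = i")
      case True
      then show ?thesis using assms(1,2) ij st by (auto simp: ex_pt_def)
    next
      case False
      then show ?thesis using A(3) B(3) eq ij by metis
    qed
  qed
  with assms(3) show False by simp
qed

lemma inS:
  assumes "p \<in> Zd d" "\<And>i. i < d \<Longrightarrow> -1 \<le> p i \<and> p i \<le> Li i + 1" "k0 < d" "p k0 < 0 \<or> p k0 > Li k0" "p \<noteq> b'"
  shows "p \<in> E1 - Q - {b'}"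
  using assms Bx_D[of p d "\<lambda>_. 0" Li k0] by (auto intro!: Bx_I)

lemma vboundary_exit:
  assumes "u \<in> vboundary d Q"
  shows "\<exists>i s. ex_pt d Li u i s (u(i := fv Li i s))"
proof -
  obtain y where uy: "u \<in> Q" "adj d u y" "y \<notin> Q" using assms by (auto simp: vboundary_def)
  obtain k s where ks: "k < d" "s = 1 \<or> s = -1" "y = u(k := u k + s)" using adj_cases[OF uy(2)] by auto
  have yZ: "y \<in> Zd d" using uy adj_Zd by auto
  have rng: "0 \<le> u k \<and> u k \<le> Li k" using Bx_D[OF uy(1) ks(1)] by simp
  have "\<not> (0 \<le> y k \<and> y k \<le> Li k)"
  proof
    assume h: "0 \<le> y k \<and> y k \<le> Li k"
    have "y \<in> Q"
    proof (rule Bx_I[OF yZ])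
      fix i assume "i < d" then show "0 \<le> y i \<and> y i \<le> Li i"
        using h ks Bx_D[OF uy(1)] by (cases "i = k") auto
    qed
    with uy show False by simp
  qed
  then have "(s = 1 \<and> u k = Li k) \<or> (s = -1 \<and> u k = 0)" using ks rng by auto
  then show ?thesis
  proof
    assume "s = 1 \<and> u k = Li k"
    then show ?thesis using uy ks by (intro exI[of _ k] exI[of _ True]) (auto simp: ex_pt_def fv_def)
  next
    assume "s = -1 \<and> u k = 0"
    then show ?thesis using uy ks by (intro exI[of _ k] exI[of _ False]) (auto simp: ex_pt_def fv_def)
  qed
qed

lemma rngQ: "x \<in> Q \<Longrightarrow> k < d \<Longrightarrow> 0 \<le> x k \<and> x k \<le> Li k"
  using Bx_D by fastforce

lemma rngE1: "x \<in> E1 \<Longrightarrow> k < d \<Longrightarrow> -1 \<le> x k \<and> x k \<le> Li k + 1"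
  using Bx_D by fastforce

lemma upd_bounds:
  assumes "x \<in> E1" "-1 \<le> z" "z \<le> Li k + 1"
  shows "\<And>i. i < d \<Longrightarrow> -1 \<le> (x(k := z)) i \<and> (x(k := z)) i \<le> Li i + 1"
  using assms rngE1 by auto


end


locale rctx = geo +
  fixes a :: "nat \<Rightarrow> int" and i s a' b j \<sigma> b'
  assumes A: "ex_pt d Li a i s a'" and B: "ex_pt d Li b j \<sigma> b'" and ab: "a \<noteq> b"
begin

abbreviation "S \<equiv> E1 - Q - {b'}"

lemma neq: "a' \<noteq> b'" by (rule ex_neq[OF A B ab])
lemma aZ: "a' \<in> Zd d" and aE: "a' \<in> E1" using ex_props[OF A] by auto
lemma aQ: "\<And>k. k < d \<Longrightarrow> 0 \<le> a k \<and> a k \<le> Li k" using rngQ ex_props(5)[OF A] by blast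
lemma bQ: "\<And>k. k < d \<Longrightarrow> 0 \<le> b k \<and> b k \<le> Li k" using rngQ ex_props(5)[OF B] by blast
lemma fvr: "-1 \<le> fv Li k t \<and> fv Li k t \<le> Li k + 1" using fv_rng by blast
lemma fvo: "fv Li k t < 0 \<or> fv Li k t > Li k" using fv_out by blast
lemma b'j: "b' j = fv Li j \<sigma>" and b'o: "\<And>k. k \<noteq> j \<Longrightarrow> b' k = b k" and jd: "j < d"
  using ex_props[OF B] by auto
lemma a'i: "a' i = fv Li i s" and a'o: "\<And>k. k \<noteq> i \<Longrightarrow> a' k = a k" and id: "i < d"
  using ex_props[OF A] by auto
lemma a'S: "a' \<in> S" using ex_props[OF A] neq by auto

lemma zr_lemma: "min x y \<le> z \<Longrightarrow> z \<le> max x y \<Longrightarrow> -1 \<le> x \<Longrightarrow> x \<le> Li k + 1 \<Longrightarrow> -1 \<le> y \<Longrightarrow> y \<le> Li k + 1 \<Longrightarrow>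
   -1 \<le> z \<and> z \<le> Li k + 1"
  by (auto simp: min_def max_def split: if_splits)

lemma aEm:
  assumes im: "i \<noteq> m" and m: "m < d" and zr: "-1 \<le> z" "z \<le> Li m + 1"
  shows "a'(m := z) \<in> E1 - Q" "a'(m := z) \<in> Zd d"
proof -
  show "a'(m := z) \<in> Zd d" using Zd_upd[OF aZ m] .
  have "a'(m := z) \<in> E1" using Bx_I[OF Zd_upd[OF aZ m] upd_bounds[OF aE zr]] .
  moreover have "a'(m := z) \<notin> Q" using rngQ[of "a'(m := z)" i] id im a'i fvo[of i s] by auto
  ultimately show "a'(m := z) \<in> E1 - Q" by auto
qed

lemma case_R2:
  assumes im: "i \<noteq> m" and m: "m < d"
    and nb: "\<not> (\<exists>z. min (a m) (fv Li m \<tau>) \<le> z \<and> z \<le> max (a m) (fv Li m \<tau>) \<and> a'(m := z) = b')"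
  shows "\<exists>w. conn d S a' w \<and> w \<in> S \<and> w m = fv Li m \<tau>"
proof -
  have am: "a' m = a m" using a'o im by auto
  have c1: "conn d S a' (a'(m := fv Li m \<tau>))"
  proof (rule segment[OF aZ m])
    fix z assume z: "min (a' m) (fv Li m \<tau>) \<le> z" "z \<le> max (a' m) (fv Li m \<tau>)"
    have zr: "-1 \<le> z" "z \<le> Li m + 1" using zr_lemma[OF z, of m] am aQ[OF m] fvr[of m \<tau>] by auto
    show "a'(m := z) \<in> S" using aEm[OF im m zr] nb z am by auto
  qed
  have "a'(m := fv Li m \<tau>) \<in> S" using aEm[OF im m fvr[THEN conjunct1] fvr[THEN conjunct2]] nb
    by (auto simp: min_def max_def)
  then show ?thesis using c1 by (intro exI[of _ "a'(m := fv Li m \<tau>)"]) auto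
qed

lemma case_R3:
  assumes im: "i \<noteq> m" and m: "m < d"
    and z0: "min (a m) (fv Li m \<tau>) \<le> z0" "z0 \<le> max (a m) (fv Li m \<tau>)" "a'(m := z0) = b'"
  shows "\<exists>w. conn d S a' w \<and> w \<in> S \<and> w m = fv Li m \<tau>"
proof -
  have am: "a' m = a m" using a'o im by auto
  have ji: "j = i"
  proof (rule ccontr)
    assume "j \<noteq> i"
    then have "b' i = b i" using b'o by auto
    moreover have "b' i = a' i" using z0(3) im by (metis fun_upd_other)
    ultimately show False using a'i bQ[OF id] fvo[of i s] by auto
  qed
  have bm: "b' m = b m" using b'o ji im by auto
  have "b' i = (a'(m := z0)) i" using z0(3) by simp
  then have b'i: "b' i = fv Li i s" using im a'i by simp
  define p1 where "p1 = a'(m := fv Li m (\<not> \<tau>))"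
  define p2 where "p2 = p1(i := fv Li i (\<not> s))"
  have p1Z: "p1 \<in> Zd d" using aZ m Zd_upd p1_def by metis
  have p2Z: "p2 \<in> Zd d" using p1Z id Zd_upd p2_def by metis
  have c1: "conn d S a' p1" unfolding p1_def
  proof (rule segment[OF aZ m])
    fix z assume z: "min (a' m) (fv Li m (\<not> \<tau>)) \<le> z" "z \<le> max (a' m) (fv Li m (\<not> \<tau>))"
    have zr: "-1 \<le> z" "z \<le> Li m + 1" using zr_lemma[OF z, of m] am aQ[OF m] fvr[of m "\<not>\<tau>"] by auto
    have "a'(m := z) \<noteq> b'"
    proof
      assume "a'(m := z) = b'"
      then have "a'(m := z) = a'(m := z0)" using z0(3) by simp
      then have "(a'(m := z)) m = (a'(m := z0)) m" by simp
      then have zz: "z = z0" by simp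
      have amr: "0 \<le> a m" "a m \<le> Li m" using aQ[OF m] by auto
      have "z0 = a m"
      proof (cases \<tau>)
        case True
        then have "min (a m) (fv Li m \<tau>) = a m" "max (a m) (fv Li m (\<not> \<tau>)) = a m"
          using amr by (simp_all add: fv_def)
        then show ?thesis using z(2) z0(1) zz am by simp
      next
        case False
        then have "max (a m) (fv Li m \<tau>) = a m" "min (a m) (fv Li m (\<not> \<tau>)) = a m"
          using amr by (simp_all add: fv_def)
        then show ?thesis using z(1) z0(2) zz am by simp
      qed
      then have "b' = a'" using z0(3) am by auto
      with neq show False by simp
    qed
    then show "a'(m := z) \<in> S" using aEm[OF im m zr] by auto
  qed
  have p1E: "p1 \<in> E1" using aEm[OF im m fvr[THEN conjunct1] fvr[THEN conjunct2]] p1_def by auto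
  have c2: "conn d S p1 p2" unfolding p2_def
  proof (rule segment[OF p1Z id])
    fix z assume z: "min (p1 i) (fv Li i (\<not> s)) \<le> z" "z \<le> max (p1 i) (fv Li i (\<not> s))"
    have pi: "p1 i = fv Li i s" using p1_def im a'i by auto
    have zr: "-1 \<le> z" "z \<le> Li i + 1" using zr_lemma[OF z, of i] pi fvr[of i s] fvr[of i "\<not> s"] by auto
    show "p1(i := z) \<in> S"
    proof (rule inS[OF Zd_upd[OF p1Z id] upd_bounds[OF p1E zr] m])
      show "(p1(i := z)) m < 0 \<or> Li m < (p1(i := z)) m" using im p1_def fvo[of m "\<not> \<tau>"] by simp
      show "p1(i := z) \<noteq> b'"
      proof
        assume "p1(i := z) = b'"
        then have "p1 m = b' m" using im by (metis fun_upd_other)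
        then show False using p1_def bm bQ[OF m] fvo[of m "\<not> \<tau>"] by simp
      qed
    qed
  qed
  have p2E: "p2 \<in> E1" unfolding p2_def using Bx_I[OF Zd_upd[OF p1Z id] upd_bounds[OF p1E fvr[THEN conjunct1] fvr[THEN conjunct2]]] .
  have mem3: "p2(m := z) \<in> S" if zr: "-1 \<le> z" "z \<le> Li m + 1" for z
  proof (rule inS[OF Zd_upd[OF p2Z m] upd_bounds[OF p2E zr] id])
    show "(p2(m := z)) i < 0 \<or> Li i < (p2(m := z)) i" using im p2_def fvo[of i "\<not> s"] by simp
    show "p2(m := z) \<noteq> b'"
    proof
      assume "p2(m := z) = b'"
      then have "p2 i = b' i" using im by (metis fun_upd_other)
      then show False using p2_def b'i fv_inj[of i "\<not> s" s] by simp
    qed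
  qed
  have pm: "p2 m = fv Li m (\<not> \<tau>)" using p1_def p2_def im by simp
  have c3: "conn d S p2 (p2(m := fv Li m \<tau>))"
  proof (rule segment[OF p2Z m])
    fix z assume z: "min (p2 m) (fv Li m \<tau>) \<le> z" "z \<le> max (p2 m) (fv Li m \<tau>)"
    have zr: "-1 \<le> z" "z \<le> Li m + 1" using zr_lemma[OF z, of m] pm fvr[of m "\<not> \<tau>"] fvr[of m \<tau>] by auto
    show "p2(m := z) \<in> S" by (rule mem3[OF zr])
  qed
  have wS: "p2(m := fv Li m \<tau>) \<in> S" using mem3[OF fvr[THEN conjunct1] fvr[THEN conjunct2]] .
  have "conn d S a' (p2(m := fv Li m \<tau>))" using conn_trans[OF conn_trans[OF c1 c2] c3] .
  then show ?thesis using wS by (intro exI[of _ "p2(m := fv Li m \<tau>)"]) auto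
qed

lemma case_R4:
  assumes im: "i = m" and sne: "s \<noteq> \<tau>" and jm: "j \<noteq> m"
  shows "\<exists>w. conn d S a' w \<and> w \<in> S \<and> w m = fv Li m \<tau>"
proof -
  have m: "m < d" using id im by simp
  define p1 where "p1 = a'(j := fv Li j (\<not> \<sigma>))"
  have p1Z: "p1 \<in> Zd d" using aZ jd Zd_upd p1_def by metis
  have aj: "a' j = a j" using a'o jm im by auto
  have c1: "conn d S a' p1" unfolding p1_def
  proof (rule segment[OF aZ jd])
    fix z assume z: "min (a' j) (fv Li j (\<not> \<sigma>)) \<le> z" "z \<le> max (a' j) (fv Li j (\<not> \<sigma>))"
    have zr: "-1 \<le> z" "z \<le> Li j + 1" using zr_lemma[OF z, of j] aj aQ[OF jd] fvr[of j "\<not> \<sigma>"] by auto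
    show "a'(j := z) \<in> S"
    proof (rule inS[OF Zd_upd[OF aZ jd] upd_bounds[OF aE zr] m])
      show "(a'(j := z)) m < 0 \<or> Li m < (a'(j := z)) m" using jm im a'i fvo[of m s] by simp
      show "a'(j := z) \<noteq> b'"
      proof
        assume "a'(j := z) = b'"
        then have "a' m = b' m" using jm by (metis fun_upd_other)
        then show False using a'i im b'o[OF jm[symmetric]] bQ[OF m] fvo[of m s] by simp
      qed
    qed
  qed
  have p1E: "p1 \<in> E1" unfolding p1_def using Bx_I[OF Zd_upd[OF aZ jd] upd_bounds[OF aE fvr[THEN conjunct1] fvr[THEN conjunct2]]] .
  have mem2: "p1(m := z) \<in> S" if zr: "-1 \<le> z" "z \<le> Li m + 1" for z
  proof (rule inS[OF Zd_upd[OF p1Z m] upd_bounds[OF p1E zr] jd])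
    show "(p1(m := z)) j < 0 \<or> Li j < (p1(m := z)) j" using jm p1_def fvo[of j "\<not> \<sigma>"] by simp
    show "p1(m := z) \<noteq> b'"
    proof
      assume "p1(m := z) = b'"
      then have "p1 j = b' j" using jm by (metis fun_upd_other)
      then show False using p1_def b'j fv_inj[of j "\<not> \<sigma>" \<sigma>] by simp
    qed
  qed
  have pm: "p1 m = fv Li m s" using p1_def jm im a'i by simp
  have c2: "conn d S p1 (p1(m := fv Li m \<tau>))"
  proof (rule segment[OF p1Z m])
    fix z assume z: "min (p1 m) (fv Li m \<tau>) \<le> z" "z \<le> max (p1 m) (fv Li m \<tau>)"
    have zr: "-1 \<le> z" "z \<le> Li m + 1" using zr_lemma[OF z, of m] pm fvr[of m s] fvr[of m \<tau>] by auto
    show "p1(m := z) \<in> S" by (rule mem2[OF zr])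
  qed
  have wS: "p1(m := fv Li m \<tau>) \<in> S" using mem2[OF fvr[THEN conjunct1] fvr[THEN conjunct2]] .
  show ?thesis using c1 c2 wS conn_trans by (intro exI[of _ "p1(m := fv Li m \<tau>)"]) auto
qed

lemma case_R5:
  assumes im: "i = m" and sne: "s \<noteq> \<tau>" and jm: "j = m"
  shows "\<exists>w. conn d S a' w \<and> w \<in> S \<and> w m = fv Li m \<tau>"
proof -
  have m: "m < d" using id im by simp
  define k where "k = (if m = 0 then 1 else (0::nat))"
  have kd: "k < d" and km: "k \<noteq> m" using d2 by (auto simp: k_def)
  define \<kappa> where "\<kappa> = (b k < a k)"
  define p1 where "p1 = a'(k := fv Li k \<kappa>)"
  have p1Z: "p1 \<in> Zd d" using aZ kd Zd_upd p1_def by metis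
  have ak: "a' k = a k" using a'o km im by auto
  have bk': "b' k = b k" using b'o km jm by auto
  have c1: "conn d S a' p1" unfolding p1_def
  proof (rule segment[OF aZ kd])
    fix z assume z: "min (a' k) (fv Li k \<kappa>) \<le> z" "z \<le> max (a' k) (fv Li k \<kappa>)"
    have zr: "-1 \<le> z" "z \<le> Li k + 1" using zr_lemma[OF z, of k] ak aQ[OF kd] fvr[of k \<kappa>] by auto
    show "a'(k := z) \<in> S"
    proof (rule inS[OF Zd_upd[OF aZ kd] upd_bounds[OF aE zr] m])
      show "(a'(k := z)) m < 0 \<or> Li m < (a'(k := z)) m" using km im a'i fvo[of m s] by simp
      show "a'(k := z) \<noteq> b'"
      proof
        assume eq: "a'(k := z) = b'"
        then have bk: "b k = z" using bk' by (metis fun_upd_same)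
        show False
        proof (cases \<kappa>)
          case True
          then have "a k \<le> z" using z ak aQ[OF kd] by (auto simp: \<kappa>_def fv_def min_def max_def split: if_splits)
          with True bk show False by (simp add: \<kappa>_def)
        next
          case False
          then have "z \<le> a k" using z ak aQ[OF kd] by (auto simp: \<kappa>_def fv_def min_def max_def split: if_splits)
          with False bk have "z = a k" by (simp add: \<kappa>_def)
          then have "a'(k := z) = a'" using ak by auto
          with eq neq show False by simp
        qed
      qed
    qed
  qed
  have p1E: "p1 \<in> E1" unfolding p1_def using Bx_I[OF Zd_upd[OF aZ kd] upd_bounds[OF aE fvr[THEN conjunct1] fvr[THEN conjunct2]]] .
  have mem2: "p1(m := z) \<in> S" if zr: "-1 \<le> z" "z \<le> Li m + 1" for z
  proof (rule inS[OF Zd_upd[OF p1Z m] upd_bounds[OF p1E zr] kd])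
    show "(p1(m := z)) k < 0 \<or> Li k < (p1(m := z)) k" using km p1_def fvo[of k \<kappa>] by simp
    show "p1(m := z) \<noteq> b'"
    proof
      assume "p1(m := z) = b'"
      then have "p1 k = b' k" using km by (metis fun_upd_other)
      then show False using p1_def bk' bQ[OF kd] fvo[of k \<kappa>] by simp
    qed
  qed
  have pm: "p1 m = fv Li m s" using p1_def km im a'i by simp
  have c2: "conn d S p1 (p1(m := fv Li m \<tau>))"
  proof (rule segment[OF p1Z m])
    fix z assume z: "min (p1 m) (fv Li m \<tau>) \<le> z" "z \<le> max (p1 m) (fv Li m \<tau>)"
    have zr: "-1 \<le> z" "z \<le> Li m + 1" using zr_lemma[OF z, of m] pm fvr[of m s] fvr[of m \<tau>] by auto
    show "p1(m := z) \<in> S" by (rule mem2[OF zr])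
  qed
  have wS: "p1(m := fv Li m \<tau>) \<in> S" using mem2[OF fvr[THEN conjunct1] fvr[THEN conjunct2]] .
  show ?thesis using c1 c2 wS conn_trans by (intro exI[of _ "p1(m := fv Li m \<tau>)"]) auto
qed

lemma reach:
  assumes m: "m < d" and mt: "(m, \<tau>) \<noteq> (j, \<sigma>)"
  shows "\<exists>w. conn d S a' w \<and> w \<in> S \<and> w m = fv Li m \<tau>"
proof (cases "i = m")
  case im: True
  show ?thesis
  proof (cases "s = \<tau>")
    case st: True
    have "conn d S a' a' \<and> a' \<in> S \<and> a' m = fv Li m \<tau>" using a'S a'i im st conn_refl by simp
    then show ?thesis by blast
  next
    case sne: False
    show ?thesis
    proof (cases "j = m")
      case True
      show ?thesis by (rule case_R5[OF im sne True])
    next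
      case False
      show ?thesis by (rule case_R4[OF im sne False])
    qed
  qed
next
  case im: False
  show ?thesis
  proof (cases "\<exists>z. min (a m) (fv Li m \<tau>) \<le> z \<and> z \<le> max (a m) (fv Li m \<tau>) \<and> a'(m := z) = b'")
    case True
    then obtain z0 where z0: "min (a m) (fv Li m \<tau>) \<le> z0" "z0 \<le> max (a m) (fv Li m \<tau>)" "a'(m := z0) = b'"
      by blast
    show ?thesis by (rule case_R3[OF im m z0])
  next
    case False
    show ?thesis by (rule case_R2[OF im m False])
  qed
qed

end

definition fv2 :: "(nat \<Rightarrow> int) \<Rightarrow> nat \<Rightarrow> bool \<Rightarrow> int" where
  "fv2 Li k t = (if t then Li k + 2 else -2)"

definition pt :: "int \<Rightarrow> nat \<Rightarrow> int" where
  "pt t = (\<lambda>k. if k = 0 then t else 0)"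

lemma pt_Zd: "0 < d \<Longrightarrow> pt t \<in> Zd d" by (auto simp: pt_def Zd_def)

lemma Bx_sub: "(\<And>k. k < d \<Longrightarrow> lo' k \<le> lo k \<and> hi k \<le> hi' k) \<Longrightarrow> Bx d lo hi \<subseteq> Bx d lo' hi'"
  unfolding Bx_def by force


lemma ball_eq: "ball_inf d (\<lambda>_. 0) r = Bx d (\<lambda>_. -r) (\<lambda>_. r)"
  unfolding ball_inf_def Bx_def by auto

lemma pt_line1: "pt t \<in> line1 (\<lambda>_. 0)"
  unfolding line1_def pt_def vadd_def vscale_def uvec_def by (auto intro!: exI[of _ t])

lemma not_vboundary:
  assumes "x \<in> Zd d" "\<And>k. k < d \<Longrightarrow> \<bar>x k\<bar> < r"
  shows "x \<notin> vboundary d (Bx d (\<lambda>_. -r) (\<lambda>_. r))"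
proof
  assume "x \<in> vboundary d (Bx d (\<lambda>_. -r) (\<lambda>_. r))"
  then obtain y where y: "adj d x y" "y \<notin> Bx d (\<lambda>_. -r) (\<lambda>_. r)" by (auto simp: vboundary_def)
  obtain k s where ks: "k < d" "s = 1 \<or> s = -1" "y = x(k := x k + s)" using adj_cases[OF y(1)] by blast
  have "y \<in> Bx d (\<lambda>_. -r) (\<lambda>_. r)"
  proof (rule Bx_I)
    show "y \<in> Zd d" using adj_Zd[OF y(1)] by simp
    fix k' assume "k' < d"
    then show "-r \<le> y k' \<and> y k' \<le> r" using assms(2)[of k'] ks by (cases "k' = k") auto
  qed
  with y show False by simp
qed

lemma pt_vboundary:
  assumes "0 < d" "0 \<le> r" "\<bar>t\<bar> = r"
  shows "pt t \<in> vboundary d (Bx d (\<lambda>_. -r) (\<lambda>_. r))"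
proof -
  have p: "pt t \<in> Bx d (\<lambda>_. -r) (\<lambda>_. r)" using assms pt_Zd[OF assms(1)] by (auto simp: Bx_def pt_def)
  define y where "y = (pt t)(0 := pt t 0 + (if t \<ge> 0 then 1 else -1))"
  have "adj d (pt t) y" unfolding y_def by (rule adj_upd[OF pt_Zd[OF assms(1)] assms(1)]) auto
  moreover have "y \<notin> Bx d (\<lambda>_. -r) (\<lambda>_. r)" using Bx_D[of y d "\<lambda>_. -r" "\<lambda>_. r" 0] assms
    by (auto simp: y_def pt_def)
  ultimately show ?thesis using p by (auto simp: vboundary_def)
qed

locale constr = geo +
  fixes N K R l :: int and a :: "nat \<Rightarrow> int" and i s a' b j \<sigma> b'
  assumes Lb: "\<And>k. Li k \<le> N" and K: "K = N + 3" and R: "R = K + 3" and l: "l = R + 3"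
    and A: "ex_pt d Li a i s a'" and B: "ex_pt d Li b j \<sigma> b'" and ab: "a \<noteq> b"
begin

sublocale rctx d Li a i s a' b j \<sigma> b'
  using A B ab by unfold_locales

definition "V3 \<longleftrightarrow> j = 0 \<and> \<not> \<sigma>"
definition "m = (if V3 then 1 else j)"
definition "\<sigma>v = (if V3 then True else \<sigma>)"

definition "UF = Bx d (\<lambda>k. if k = m then (if \<sigma>v then -R else Li m + 2) else -R)
                      (\<lambda>k. if k = m then (if \<sigma>v then -2 else R) else if k = 0 then K - 1 else R)"
definition "VF = Bx d (\<lambda>k. if k = m then (if \<sigma>v then Li m + 2 else -R) else if k = 0 then -K + 1 else -R)
                      (\<lambda>k. if k = m then (if \<sigma>v then R else -2) else R)"
definition "LB = Bx d (\<lambda>_. -R) (\<lambda>k. if k = 0 then -K else R)"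
definition "RB = Bx d (\<lambda>k. if k = 0 then K else -R) (\<lambda>_. R)"
definition "TU = Bx d (\<lambda>k. if k = 0 then -l else 0) (\<lambda>k. if k = 0 then -R else 0)"
definition "TV = Bx d (\<lambda>k. if k = 0 then R else 0) (\<lambda>k. if k = 0 then l else 0)"
definition "Col = (if V3 then Bx d (\<lambda>k. if k = 0 then -2 else b k) (\<lambda>k. if k = 0 then -2 else if k = 1 then Li 1 + 1 else b k) else {})"

definition "C1 = S \<union> UF \<union> LB \<union> TU"
definition "C2 = {b'} \<union> Col \<union> VF \<union> RB \<union> TV"

lemma d0: "0 < d" and d1: "1 < d" using d2 by auto
lemma md: "m < d" using jd d1 by (auto simp: m_def)
lemma m0: "m = 0 \<Longrightarrow> \<sigma>v" by (auto simp: m_def \<sigma>v_def V3_def split: if_splits)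
lemma L0: "0 \<le> Li k" "Li k \<le> N" using Lpos Lb by auto

lemma N0: "0 \<le> N" using L0[of 0] by simp

lemma E1x: "x \<in> E1 \<Longrightarrow> k < d \<Longrightarrow> -1 \<le> x k \<and> x k \<le> Li k + 1" by (rule rngE1)

lemma UF_nE1: "x \<in> UF \<Longrightarrow> x \<notin> E1"
proof
  assume u: "x \<in> UF" and e: "x \<in> E1"
  from Bx_D[OF u[unfolded UF_def] md] have "(if \<sigma>v then -R else Li m + 2) \<le> x m \<and> x m \<le> (if \<sigma>v then -2 else R)"
    by simp
  moreover have "-1 \<le> x m \<and> x m \<le> Li m + 1" using E1x[OF e md] .
  ultimately show False by (cases \<sigma>v) auto
qed

lemma VF_nE1: "x \<in> VF \<Longrightarrow> x \<notin> E1"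
proof
  assume u: "x \<in> VF" and e: "x \<in> E1"
  from Bx_D[OF u[unfolded VF_def] md] have "(if \<sigma>v then Li m + 2 else -R) \<le> x m \<and> x m \<le> (if \<sigma>v then R else -2)"
    by simp
  moreover have "-1 \<le> x m \<and> x m \<le> Li m + 1" using E1x[OF e md] .
  ultimately show False by (cases \<sigma>v) auto
qed

lemma x0_nE1: "x \<in> E1 \<Longrightarrow> -1 \<le> x 0 \<and> x 0 \<le> N + 1"
  using E1x[OF _ d0, of x] L0[of 0] by auto

lemma LB0: assumes "x \<in> LB" shows "x 0 \<le> -K"
  using Bx_D[OF assms[unfolded LB_def] d0] by simp
lemma RB0: assumes "x \<in> RB" shows "K \<le> x 0"
  using Bx_D[OF assms[unfolded RB_def] d0] by simp
lemma TU0: assumes "x \<in> TU" shows "x 0 \<le> -R"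
  using Bx_D[OF assms[unfolded TU_def] d0] by simp
lemma TV0: assumes "x \<in> TV" shows "R \<le> x 0"
  using Bx_D[OF assms[unfolded TV_def] d0] by simp
lemma Col0: "x \<in> Col \<Longrightarrow> x 0 = -2 \<and> V3 \<and> b 1 \<le> x 1"
proof -
  assume c: "x \<in> Col"
  then have v: "V3" by (auto simp: Col_def split: if_splits)
  with c have c': "x \<in> Bx d (\<lambda>k. if k = 0 then -2 else b k) (\<lambda>k. if k = 0 then -2 else if k = 1 then Li 1 + 1 else b k)"
    by (simp add: Col_def)
  show ?thesis using Bx_D[OF c' d0] Bx_D[OF c' d1] v by simp
qed

lemma UF0: "x \<in> UF \<Longrightarrow> x 0 \<le> K - 1"
proof -
  assume u: "x \<in> UF"
  note h = Bx_D[OF u[unfolded UF_def] d0]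
  show ?thesis
  proof (cases "m = 0")
    case True
    then have "\<sigma>v" by (rule m0)
    with True h show ?thesis using K L0[of 0] by simp
  next
    case False
    with h show ?thesis by simp
  qed
qed

lemma VF0: "x \<in> VF \<Longrightarrow> -K + 1 \<le> x 0"
proof -
  assume u: "x \<in> VF"
  note h = Bx_D[OF u[unfolded VF_def] d0]
  show ?thesis
  proof (cases "m = 0")
    case True
    then have "\<sigma>v" by (rule m0)
    with True h show ?thesis using K L0[of 0] by simp
  next
    case False
    with h show ?thesis by simp
  qed
qed

lemma far_nE1: assumes "x \<in> UF \<union> VF \<union> LB \<union> RB \<union> TU \<union> TV \<union> Col" shows "x \<notin> E1"
proof
  assume e: "x \<in> E1"
  have r: "-1 \<le> x 0 \<and> x 0 \<le> N + 1" by (rule x0_nE1[OF e])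
  from assms show False
  proof (elim UnE)
    assume "x \<in> UF" with UF_nE1 e show False by blast
  next
    assume "x \<in> VF" with VF_nE1 e show False by blast
  next
    assume "x \<in> LB" from LB0[OF this] r K N0 show False by simp
  next
    assume "x \<in> RB" from RB0[OF this] r K N0 show False by simp
  next
    assume "x \<in> TU" from TU0[OF this] r K R N0 show False by simp
  next
    assume "x \<in> TV" from TV0[OF this] r K R N0 show False by simp
  next
    assume "x \<in> Col" from Col0[OF this] r show False by simp
  qed
qed

lemma UF_VF: "x \<in> UF \<Longrightarrow> x \<notin> VF"
proof
  assume u: "x \<in> UF" and v: "x \<in> VF"
  from Bx_D[OF u[unfolded UF_def] md] have "(if \<sigma>v then -R else Li m + 2) \<le> x m \<and> x m \<le> (if \<sigma>v then -2 else R)"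
    by simp
  moreover from Bx_D[OF v[unfolded VF_def] md] have "(if \<sigma>v then Li m + 2 else -R) \<le> x m \<and> x m \<le> (if \<sigma>v then R else -2)"
    by simp
  ultimately show False using L0[of m] by (cases \<sigma>v) auto
qed

lemma UF_Col: "x \<in> UF \<Longrightarrow> x \<notin> Col"
proof
  assume u: "x \<in> UF" and c: "x \<in> Col"
  then have v: "V3" "b 1 \<le> x 1" using Col0 by auto
  then have "m = 1" "\<sigma>v" by (auto simp: m_def \<sigma>v_def)
  with Bx_D[OF u[unfolded UF_def] d1] have "x 1 \<le> -2" by simp
  with v bQ[OF d1] show False by simp
qed

lemma C1_C2: "C1 \<inter> C2 = {}"
proof -
  have "x \<notin> C2" if x: "x \<in> C1" for x
  proof
    assume x2: "x \<in> C2"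
    show False
    proof (cases "x \<in> S")
      case True
      then have "x \<in> E1" "x \<noteq> b'" by auto
      then have "x \<in> Col \<union> VF \<union> RB \<union> TV" using x2 by (auto simp: C2_def)
      then show False using far_nE1[of x] \<open>x \<in> E1\<close> by auto
    next
      case False
      then have xf: "x \<in> UF \<union> LB \<union> TU" using x by (auto simp: C1_def)
      have "b' \<in> E1" using ex_props[OF B] by simp
      then have "x \<noteq> b'" using xf far_nE1[of x] by auto
      then have "x \<in> Col \<union> VF \<union> RB \<union> TV" using x2 by (auto simp: C2_def)
      then show False
      proof (elim UnE)
        assume c: "x \<in> Col"
        from xf show False
        proof (elim UnE)
          assume "x \<in> UF" with UF_Col c show False by blast
        next
          assume "x \<in> LB" from LB0[OF this] Col0[OF c] K N0 show False by simp
        next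
          assume "x \<in> TU" from TU0[OF this] Col0[OF c] K R N0 show False by simp
        qed
      next
        assume c: "x \<in> VF"
        from xf show False
        proof (elim UnE)
          assume "x \<in> UF" with UF_VF c show False by blast
        next
          assume "x \<in> LB" from LB0[OF this] VF0[OF c] K N0 show False by simp
        next
          assume "x \<in> TU" from TU0[OF this] VF0[OF c] K R N0 show False by simp
        qed
      next
        assume c: "x \<in> RB"
        from xf show False
        proof (elim UnE)
          assume "x \<in> UF" from UF0[OF this] RB0[OF c] show False by simp
        next
          assume "x \<in> LB" from LB0[OF this] RB0[OF c] K N0 show False by simp
        next
          assume "x \<in> TU" from TU0[OF this] RB0[OF c] K R N0 show False by simp
        qed
      next
        assume c: "x \<in> TV"
        from xf show False
        proof (elim UnE)
          assume "x \<in> UF" from UF0[OF this] TV0[OF c] R show False by simp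
        next
          assume "x \<in> LB" from LB0[OF this] TV0[OF c] K R N0 show False by simp
        next
          assume "x \<in> TU" from TU0[OF this] TV0[OF c] K R N0 show False by simp
        qed
      qed
    qed
  qed
  then show ?thesis by blast
qed

lemma Q_E1: "Q \<subseteq> E1" by (rule Bx_sub) auto

lemma C1_Q: "C1 \<inter> Q = {}"
proof -
  have "x \<notin> Q" if "x \<in> C1" for x
  proof -
    from that have "x \<in> S \<or> x \<in> UF \<union> VF \<union> LB \<union> RB \<union> TU \<union> TV \<union> Col" by (auto simp: C1_def)
    then show ?thesis using far_nE1[of x] Q_E1 by auto
  qed
  then show ?thesis by blast
qed

lemma C2_Q: "C2 \<inter> Q = {}"
proof -
  have "x \<notin> Q" if "x \<in> C2" for x
  proof -
    from that have "x = b' \<or> x \<in> UF \<union> VF \<union> LB \<union> RB \<union> TU \<union> TV \<union> Col" by (auto simp: C2_def)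
    then show ?thesis using far_nE1[of x] Q_E1 ex_props(7)[OF B] by auto
  qed
  then show ?thesis by blast
qed

lemma fv2_adj: "fv2 Li k t = fv Li k t + (if t then 1 else -1)"
  by (auto simp: fv2_def fv_def)

lemma fv2_rng: "-R \<le> fv2 Li k t \<and> fv2 Li k t \<le> R"
  using L0[of k] K R by (auto simp: fv2_def)

lemma SZ: "x \<in> S \<Longrightarrow> x \<in> Zd d" by (auto simp: Bx_def)

lemma mt_neq: "(m, \<not> \<sigma>v) \<noteq> (j, \<sigma>)"
  by (auto simp: m_def \<sigma>v_def V3_def)

lemma pt_LB: "pt (-R) \<in> LB" and pt_TU1: "pt (-R) \<in> TU" and pt_TU2: "pt (-l) \<in> TU"
  and pt_RB: "pt R \<in> RB" and pt_TV1: "pt R \<in> TV" and pt_TV2: "pt l \<in> TV"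
  unfolding LB_def TU_def RB_def TV_def using pt_Zd[OF d0] K R l N0 by (auto simp: Bx_def pt_def)

lemma conn_C1: "conn d C1 a' (pt (-l))"
proof -
  obtain w where w: "conn d S a' w" "w \<in> S" "w m = fv Li m (\<not> \<sigma>v)"
    using reach[OF md mt_neq] by blast
  have wZ: "w \<in> Zd d" using SZ[OF w(2)] .
  have wE: "w \<in> E1" using w(2) by simp
  define w' where "w' = w(m := fv2 Li m (\<not> \<sigma>v))"
  have adjw: "adj d w w'"
  proof -
    have "w' = w(m := w m + (if \<not> \<sigma>v then 1 else -1))" using w(3) fv2_adj by (simp add: w'_def)
    then show ?thesis using adj_upd[OF wZ md, of "if \<not> \<sigma>v then 1 else -1"] by simp
  qed
  have w'UF: "w' \<in> UF" unfolding UF_def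
  proof (rule Bx_I)
    show "w' \<in> Zd d" unfolding w'_def using Zd_upd[OF wZ md] .
    fix k assume k: "k < d"
    show "(if k = m then if \<sigma>v then - R else Li m + 2 else - R) \<le> w' k \<and>
          w' k \<le> (if k = m then if \<sigma>v then - 2 else R else if k = 0 then K - 1 else R)"
    proof (cases "k = m")
      case True
      then show ?thesis using L0[of m] K R by (auto simp: w'_def fv2_def)
    next
      case False
      then have "w' k = w k" by (simp add: w'_def)
      moreover have "-1 \<le> w k \<and> w k \<le> Li k + 1" using E1x[OF wE k] .
      ultimately show ?thesis using False L0[of k] K R by auto
    qed
  qed
  define qU where "qU = (\<lambda>k. if k = 0 then -K else if k = m then fv2 Li m (\<not> \<sigma>v) else 0)"
  have qZ: "qU \<in> Zd d" using d0 md by (auto simp: qU_def Zd_def)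
  have qUF: "qU \<in> UF" unfolding UF_def
  proof (rule Bx_I[OF qZ])
    fix k assume k: "k < d"
    show "(if k = m then if \<sigma>v then - R else Li m + 2 else - R) \<le> qU k \<and>
          qU k \<le> (if k = m then if \<sigma>v then - 2 else R else if k = 0 then K - 1 else R)"
    proof (cases "k = m")
      case True
      show ?thesis
      proof (cases "m = 0")
        case m0': True
        then have "\<sigma>v" by (rule m0)
        with True m0' show ?thesis using K R N0 by (simp add: qU_def)
      next
        case False
        with True show ?thesis using L0[of m] K R by (auto simp: qU_def fv2_def)
      qed
    next
      case False
      then show ?thesis using K R N0 by (auto simp: qU_def)
    qed
  qed
  have qLB: "qU \<in> LB" unfolding LB_def
  proof (rule Bx_I[OF qZ])
    fix k assume k: "k < d"
    show "- R \<le> qU k \<and> qU k \<le> (if k = 0 then - K else R)"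
      using fv2_rng[of m "\<not> \<sigma>v"] K R N0 by (auto simp: qU_def)
  qed
  have "conn d C1 a' w" by (rule conn_mono[OF w(1)]) (auto simp: C1_def)
  moreover have "conn d C1 w w'" using conn_step[OF adjw] w(2) w'UF by (auto simp: C1_def)
  moreover have "conn d UF w' qU" using Bx_conn[OF w'UF[unfolded UF_def] qUF[unfolded UF_def]] unfolding UF_def .
  then have "conn d C1 w' qU" by (rule conn_mono) (auto simp: C1_def)
  moreover have "conn d LB qU (pt (-R))" using Bx_conn[OF qLB[unfolded LB_def] pt_LB[unfolded LB_def]] unfolding LB_def .
  then have "conn d C1 qU (pt (-R))" by (rule conn_mono) (auto simp: C1_def)
  moreover have "conn d TU (pt (-R)) (pt (-l))" using Bx_conn[OF pt_TU1[unfolded TU_def] pt_TU2[unfolded TU_def]] unfolding TU_def .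
  then have "conn d C1 (pt (-R)) (pt (-l))" by (rule conn_mono) (auto simp: C1_def)
  ultimately show ?thesis by (meson conn_trans)
qed

lemma VF_entry: "\<exists>e. e \<in> VF \<and> conn d C2 b' e"
proof (cases V3)
  case False
  then have mj: "m = j" and sv: "\<sigma>v = \<sigma>" by (auto simp: m_def \<sigma>v_def)
  have bZ: "b' \<in> Zd d" using ex_props(1)[OF B] .
  define e where "e = b'(j := fv2 Li j \<sigma>)"
  have adje: "adj d b' e"
  proof -
    have "e = b'(j := b' j + (if \<sigma> then 1 else -1))" using b'j fv2_adj by (simp add: e_def)
    then show ?thesis using adj_upd[OF bZ jd, of "if \<sigma> then 1 else -1"] by simp
  qed
  have eVF: "e \<in> VF" unfolding VF_def
  proof (rule Bx_I)
    show "e \<in> Zd d" unfolding e_def using Zd_upd[OF bZ jd] .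
    fix k assume k: "k < d"
    show "(if k = m then if \<sigma>v then Li m + 2 else - R else if k = 0 then - K + 1 else - R) \<le> e k \<and>
          e k \<le> (if k = m then if \<sigma>v then R else - 2 else R)"
    proof (cases "k = j")
      case True
      then show ?thesis using mj sv L0[of j] K R by (auto simp: e_def fv2_def)
    next
      case False
      then have "e k = b k" using b'o by (simp add: e_def)
      then show ?thesis using False mj bQ[OF k] L0[of k] K R by auto
    qed
  qed
  have "conn d C2 b' e" using conn_step[OF adje] eVF by (auto simp: C2_def)
  with eVF show ?thesis by blast
next
  case True
  then have j0: "j = 0" and ns: "\<not> \<sigma>" unfolding V3_def by auto
  have m1: "m = 1" and sv: "\<sigma>v" using True unfolding m_def \<sigma>v_def by auto
  have bZ: "b \<in> Zd d" using ex_props(5)[OF B] Bx_Zd by blast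
  have b'eq: "b' = b(0 := -1)" using B j0 ns by (simp add: ex_pt_def fv_def)
  define c0 where "c0 = b(0 := -2)"
  define c1 where "c1 = c0(1 := Li 1 + 1)"
  define c2 where "c2 = c1(1 := Li 1 + 2)"
  have b'Z: "b' \<in> Zd d" using ex_props(1)[OF B] .
  have c0Z: "c0 \<in> Zd d" unfolding c0_def using Zd_upd[OF bZ d0] .
  have c1Z: "c1 \<in> Zd d" unfolding c1_def using Zd_upd[OF c0Z d1] .
  have a0: "adj d b' c0"
  proof -
    have "c0 = b'(0 := b' 0 + -1)" using b'eq by (simp add: c0_def)
    then show ?thesis using adj_upd[OF b'Z d0, of "-1"] by simp
  qed
  have a2: "adj d c1 c2"
  proof -
    have "c2 = c1(1 := c1 1 + 1)" by (simp add: c1_def c2_def ac_simps)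
    then show ?thesis using adj_upd[OF c1Z d1, of 1] by simp
  qed
  let ?Cb = "Bx d (\<lambda>k. if k = 0 then -2 else b k) (\<lambda>k. if k = 0 then -2 else if k = 1 then Li 1 + 1 else b k)"
  have ColEq: "Col = ?Cb" using True by (simp add: Col_def)
  have c0C: "c0 \<in> ?Cb"
  proof (rule Bx_I[OF c0Z])
    fix k assume "k < d"
    show "(if k = 0 then -2 else b k) \<le> c0 k \<and> c0 k \<le> (if k = 0 then -2 else if k = 1 then Li 1 + 1 else b k)"
      using bQ[OF d1] by (auto simp: c0_def)
  qed
  have c1C: "c1 \<in> ?Cb"
  proof (rule Bx_I[OF c1Z])
    fix k assume "k < d"
    show "(if k = 0 then -2 else b k) \<le> c1 k \<and> c1 k \<le> (if k = 0 then -2 else if k = 1 then Li 1 + 1 else b k)"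
      using bQ[OF d1] by (auto simp: c0_def c1_def)
  qed
  have c2VF: "c2 \<in> VF" unfolding VF_def
  proof (rule Bx_I)
    show "c2 \<in> Zd d" unfolding c2_def using Zd_upd[OF c1Z d1] .
    fix k assume k: "k < d"
    show "(if k = m then if \<sigma>v then Li m + 2 else - R else if k = 0 then - K + 1 else - R) \<le> c2 k \<and>
          c2 k \<le> (if k = m then if \<sigma>v then R else - 2 else R)"
      using m1 sv bQ[OF k] L0[of 1] L0[of k] K R by (auto simp: c0_def c1_def c2_def)
  qed
  have "conn d C2 b' c0" using conn_step[OF a0] c0C ColEq by (auto simp: C2_def)
  moreover have "conn d Col c0 c1" using Bx_conn[OF c0C c1C] ColEq by simp
  then have "conn d C2 c0 c1" by (rule conn_mono) (auto simp: C2_def)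
  moreover have "conn d C2 c1 c2" using conn_step[OF a2] c1C c2VF ColEq by (auto simp: C2_def)
  ultimately have "conn d C2 b' c2" by (meson conn_trans)
  with c2VF show ?thesis by blast
qed

lemma conn_C2: "conn d C2 b' (pt l)"
proof -
  obtain e where e: "e \<in> VF" "conn d C2 b' e" using VF_entry by blast
  define qV where "qV = (\<lambda>k. if k = 0 then K else if k = m then fv2 Li m \<sigma>v else 0)"
  have qZ: "qV \<in> Zd d" using d0 md by (auto simp: qV_def Zd_def)
  have qVF: "qV \<in> VF" unfolding VF_def
  proof (rule Bx_I[OF qZ])
    fix k assume k: "k < d"
    show "(if k = m then if \<sigma>v then Li m + 2 else - R else if k = 0 then - K + 1 else - R) \<le> qV k \<and>
          qV k \<le> (if k = m then if \<sigma>v then R else - 2 else R)"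
    proof (cases "k = m")
      case True
      show ?thesis
      proof (cases "m = 0")
        case m0': True
        then have "\<sigma>v" by (rule m0)
        with True m0' show ?thesis using K R L0[of 0] by (simp add: qV_def)
      next
        case False
        with True show ?thesis using L0[of m] K R by (auto simp: qV_def fv2_def)
      qed
    next
      case False
      then show ?thesis using K R N0 by (auto simp: qV_def)
    qed
  qed
  have qRB: "qV \<in> RB" unfolding RB_def
  proof (rule Bx_I[OF qZ])
    fix k assume k: "k < d"
    show "(if k = 0 then K else - R) \<le> qV k \<and> qV k \<le> R"
      using fv2_rng[of m \<sigma>v] K R N0 by (auto simp: qV_def)
  qed
  have "conn d VF e qV" using Bx_conn[OF e(1)[unfolded VF_def] qVF[unfolded VF_def]] unfolding VF_def .
  then have "conn d C2 e qV" by (rule conn_mono) (auto simp: C2_def)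
  moreover have "conn d RB qV (pt R)" using Bx_conn[OF qRB[unfolded RB_def] pt_RB[unfolded RB_def]] unfolding RB_def .
  then have "conn d C2 qV (pt R)" by (rule conn_mono) (auto simp: C2_def)
  moreover have "conn d TV (pt R) (pt l)" using Bx_conn[OF pt_TV1[unfolded TV_def] pt_TV2[unfolded TV_def]] unfolding TV_def .
  then have "conn d C2 (pt R) (pt l)" by (rule conn_mono) (auto simp: C2_def)
  ultimately show ?thesis using e(2) by (meson conn_trans)
qed

abbreviation "Bin \<equiv> Bx d (\<lambda>_. -R) (\<lambda>_. R)"
abbreviation "Bl \<equiv> Bx d (\<lambda>_. -l) (\<lambda>_. l)"

lemma TU_pt: "x \<in> TU \<Longrightarrow> x = pt (x 0) \<and> -l \<le> x 0 \<and> x 0 \<le> -R"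
proof -
  assume x: "x \<in> TU"
  have Z: "x \<in> Zd d" using x Bx_Zd unfolding TU_def by blast
  have "x = pt (x 0)"
  proof
    fix k show "x k = pt (x 0) k"
    proof (cases "k = 0")
      case False
      show ?thesis
      proof (cases "k < d")
        case True
        then show ?thesis using Bx_D[OF x[unfolded TU_def] True] False by (simp add: pt_def)
      next
        case False2: False
        then show ?thesis using Z False by (simp add: pt_def Zd_def)
      qed
    qed (simp add: pt_def)
  qed
  then show ?thesis using Bx_D[OF x[unfolded TU_def] d0] by simp
qed

lemma TV_pt: "x \<in> TV \<Longrightarrow> x = pt (x 0) \<and> R \<le> x 0 \<and> x 0 \<le> l"
proof -
  assume x: "x \<in> TV"
  have Z: "x \<in> Zd d" using x Bx_Zd unfolding TV_def by blast
  have "x = pt (x 0)"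
  proof
    fix k show "x k = pt (x 0) k"
    proof (cases "k = 0")
      case False
      show ?thesis
      proof (cases "k < d")
        case True
        then show ?thesis using Bx_D[OF x[unfolded TV_def] True] False by (simp add: pt_def)
      next
        case False2: False
        then show ?thesis using Z False by (simp add: pt_def Zd_def)
      qed
    qed (simp add: pt_def)
  qed
  then show ?thesis using Bx_D[OF x[unfolded TV_def] d0] by simp
qed

lemma E1_Bin: "E1 \<subseteq> Bin" apply (rule Bx_sub) subgoal for k using L0[of k] L0[of m] K R N0 by auto done
lemma Q_Bin: "Q \<subseteq> Bin" using Q_E1 E1_Bin by blast
lemma UF_Bin: "UF \<subseteq> Bin" unfolding UF_def apply (rule Bx_sub) subgoal for k using L0[of k] L0[of m] K R N0 by auto done
lemma VF_Bin: "VF \<subseteq> Bin" unfolding VF_def apply (rule Bx_sub) subgoal for k using L0[of k] L0[of m] K R N0 by auto done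
lemma LB_Bin: "LB \<subseteq> Bin" unfolding LB_def apply (rule Bx_sub) subgoal for k using L0[of k] L0[of m] K R N0 by auto done
lemma RB_Bin: "RB \<subseteq> Bin" unfolding RB_def apply (rule Bx_sub) subgoal for k using L0[of k] L0[of m] K R N0 by auto done
lemma Col_Bin: "Col \<subseteq> Bin"
proof (cases V3)
  case True
  have "Bx d (\<lambda>k. if k = 0 then -2 else b k) (\<lambda>k. if k = 0 then -2 else if k = 1 then Li 1 + 1 else b k) \<subseteq> Bin"
    apply (rule Bx_sub) subgoal for k using bQ[of k] L0[of k] L0[of 1] K R N0 by auto done
  then show ?thesis using True by (simp add: Col_def)
qed (simp add: Col_def)

lemma C1_sub: "C1 \<subseteq> Bin \<union> TU"
  using E1_Bin UF_Bin LB_Bin unfolding C1_def by blast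
lemma C2_sub: "C2 \<subseteq> Bin \<union> TV"
  using E1_Bin VF_Bin RB_Bin Col_Bin ex_props(6)[OF B] unfolding C2_def by blast

lemma Bin_Bl: "Bin \<subseteq> Bl" apply (rule Bx_sub) using R l K N0 by auto
lemma TU_Bl: "TU \<subseteq> Bl" unfolding TU_def by (rule Bx_sub) (use R l K N0 in auto)
lemma TV_Bl: "TV \<subseteq> Bl" unfolding TV_def by (rule Bx_sub) (use R l K N0 in auto)

lemma all_Bl: "C1 \<subseteq> Bl" "C2 \<subseteq> Bl" "Q \<subseteq> Bl"
  using C1_sub C2_sub Q_Bin Bin_Bl TU_Bl TV_Bl by blast+

lemma axis_edge_aux:
  assumes x: "x \<notin> Bin" "x = pt t" "t < -R \<or> t > R" and y: "adj d x y" "y \<in> Bin \<union> TU \<union> TV"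
  shows "y \<in> line1 (\<lambda>_. 0)"
proof (cases "y \<in> Bin")
  case True
  obtain k s where ks: "k < d" "s = 1 \<or> s = -1" "y = x(k := x k + s)" using adj_cases[OF y(1)] by blast
  show ?thesis
  proof (cases "k = 0")
    case True
    then have "y = pt (t + s)" using ks x(2) by (auto simp: pt_def)
    then show ?thesis using pt_line1 by simp
  next
    case False
    then have "y 0 = t" using ks x(2) by (simp add: pt_def)
    moreover have "-R \<le> y 0 \<and> y 0 \<le> R" using Bx_D[OF \<open>y \<in> Bin\<close> d0] by simp
    ultimately show ?thesis using x(3) by simp
  qed
next
  case False
  then have "y \<in> TU \<or> y \<in> TV" using y by blast
  then show ?thesis using TU_pt TV_pt pt_line1 by metis
qed

lemma axis_edge:
  assumes "x \<in> C1 \<and> y \<in> C1 \<or> x \<in> C2 \<and> y \<in> C2" "adj d x y" "\<not> (x \<in> Bin \<and> y \<in> Bin)"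
  shows "x \<in> line1 (\<lambda>_. 0) \<and> y \<in> line1 (\<lambda>_. 0)"
proof -
  have U: "C1 \<union> C2 \<subseteq> Bin \<union> TU \<union> TV" using C1_sub C2_sub by blast
  have key: "x' \<in> line1 (\<lambda>_. 0) \<and> y' \<in> line1 (\<lambda>_. 0)"
    if xy: "x' \<in> C1 \<union> C2" "y' \<in> C1 \<union> C2" "adj d x' y'" "x' \<notin> Bin" for x' y'
  proof -
    have "x' \<in> TU \<or> x' \<in> TV" using xy U by blast
    then obtain t where t: "x' = pt t" "t < -R \<or> t > R"
    proof
      assume "x' \<in> TU"
      from TU_pt[OF this] have "x' = pt (x' 0)" "x' 0 \<le> -R" by auto
      moreover have "x' 0 \<noteq> -R"
      proof
        assume "x' 0 = -R"
        then have "x' = pt (-R)" using \<open>x' = pt (x' 0)\<close> by simp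
        then have "x' \<in> Bin" using pt_Zd[OF d0] R K N0 by (auto simp: Bx_def pt_def)
        with xy show False by simp
      qed
      ultimately show ?thesis using that by force
    next
      assume "x' \<in> TV"
      from TV_pt[OF this] have "x' = pt (x' 0)" "R \<le> x' 0" by auto
      moreover have "x' 0 \<noteq> R"
      proof
        assume "x' 0 = R"
        then have "x' = pt R" using \<open>x' = pt (x' 0)\<close> by simp
        then have "x' \<in> Bin" using pt_Zd[OF d0] R K N0 by (auto simp: Bx_def pt_def)
        with xy show False by simp
      qed
      ultimately show ?thesis using that by force
    qed
    have "y' \<in> line1 (\<lambda>_. 0)" using axis_edge_aux[OF xy(4) t xy(3)] xy U by blast
    then show ?thesis using t pt_line1 by simp
  qed
  show ?thesis
  proof (cases "x \<in> Bin")
    case True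
    then have "y \<notin> Bin" using assms(3) by simp
    then show ?thesis using key[of y x] assms(1) adj_sym[OF assms(2)] by blast
  next
    case False
    then show ?thesis using key[of x y] assms(1,2) by blast
  qed
qed

lemma Bin_nb: "x \<in> Bin \<Longrightarrow> x \<notin> vboundary d Bl"
proof -
  assume x: "x \<in> Bin"
  show ?thesis
  proof (rule not_vboundary)
    show "x \<in> Zd d" using x Bx_Zd by blast
    fix k assume "k < d"
    then show "\<bar>x k\<bar> < l" using Bx_D[OF x \<open>k < d\<close>] R l K N0 by auto
  qed
qed

lemma C1_nb: "x \<in> C1 \<Longrightarrow> x \<in> vboundary d Bl \<Longrightarrow> x = pt (-l)"
proof (rule ccontr)
  assume x: "x \<in> C1" "x \<in> vboundary d Bl" "x \<noteq> pt (-l)"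
  have "x \<notin> Bin" using Bin_nb x by blast
  then have "x \<in> TU" using x C1_sub by blast
  from TU_pt[OF this] have t: "x = pt (x 0)" "-l \<le> x 0" "x 0 \<le> -R" by auto
  have "x 0 \<noteq> -l" using t x(3) by metis
  have "x \<notin> vboundary d Bl"
  proof (rule not_vboundary)
    show "x \<in> Zd d" using t pt_Zd[OF d0] by metis
    fix k assume "k < d"
    have xk: "x k = (if k = 0 then x 0 else 0)" by (subst t(1)) (simp add: pt_def)
    show "\<bar>x k\<bar> < l" using xk t \<open>x 0 \<noteq> -l\<close> R K N0 l by auto
  qed
  with x show False by simp
qed

lemma C2_nb: "x \<in> C2 \<Longrightarrow> x \<in> vboundary d Bl \<Longrightarrow> x = pt l"
proof (rule ccontr)
  assume x: "x \<in> C2" "x \<in> vboundary d Bl" "x \<noteq> pt l"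
  have "x \<notin> Bin" using Bin_nb x by blast
  then have "x \<in> TV" using x C2_sub by blast
  from TV_pt[OF this] have t: "x = pt (x 0)" "R \<le> x 0" "x 0 \<le> l" by auto
  have "x 0 \<noteq> l" using t x(3) by metis
  have "x \<notin> vboundary d Bl"
  proof (rule not_vboundary)
    show "x \<in> Zd d" using t pt_Zd[OF d0] by metis
    fix k assume "k < d"
    have xk: "x k = (if k = 0 then x 0 else 0)" by (subst t(1)) (simp add: pt_def)
    show "\<bar>x k\<bar> < l" using xk t \<open>x 0 \<noteq> l\<close> R K N0 l by auto
  qed
  with x show False by simp
qed

end


locale fpp =
  fixes d :: nat and L :: "ennreal measure"
  assumes PL: "prob_space L" and SL: "sets L = sets borel"
begin

abbreviation "I \<equiv> edges d"
abbreviation "P \<equiv> FPP d L"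

sublocale pp: product_prob_space "\<lambda>_. L" I
  unfolding product_prob_space_def product_prob_space_axioms_def product_sigma_finite_def
  using PL prob_space_imp_sigma_finite by auto

lemma P_eq: "P = PiM I (\<lambda>_. L)" by (simp add: FPP_def)

lemma spaceL: "space L = UNIV"
  using sets_eq_imp_space_eq[OF SL] by simp

lemma space_P: "space P = PiE I (\<lambda>_. UNIV)"
  by (simp add: P_eq space_PiM spaceL)

lemma prob_P: "prob_space P" unfolding P_eq by (rule pp.P.prob_space_axioms)

lemma comp_meas: "e \<in> I \<Longrightarrow> (\<lambda>\<omega>. \<omega> e) \<in> borel_measurable P"
proof -
  assume "e \<in> I"
  then have "(\<lambda>\<omega>. \<omega> e) \<in> measurable P L" unfolding P_eq by (rule measurable_component_singleton)
  then show ?thesis using measurable_cong_sets[OF refl SL] by blast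
qed

lemma marginal:
  assumes "e \<in> I" "S \<in> sets borel"
  shows "measure P {\<omega>\<in>space P. \<omega> e \<in> S} = measure L S"
proof -
  have "emeasure P {\<omega>\<in>space P. \<omega> e \<in> S} = emeasure L S"
    unfolding P_eq using pp.emeasure_PiM_Collect_single[of e S] assms SL by simp
  then show ?thesis by (simp add: measure_def)
qed

lemma indep_coords:
  assumes "I \<noteq> {}"
  shows "prob_space.indep_vars P (\<lambda>_. L) (\<lambda>i \<omega>. \<omega> i) I"
proof -
  interpret P: prob_space P by (rule prob_P)
  have rv: "(\<lambda>\<omega>. \<omega> i) \<in> measurable P L" for i :: "(nat \<Rightarrow> int) set"
  proof (cases "i \<in> I")
    case True
    then show ?thesis unfolding P_eq by (rule measurable_component_singleton)
  next
    case False
    have "(\<lambda>_. undefined) \<in> measurable P L" by (rule measurable_const) (simp add: spaceL)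
    moreover have "\<And>\<omega>. \<omega> \<in> space P \<Longrightarrow> \<omega> i = undefined" using False by (auto simp: space_P PiE_def extensional_def)
    ultimately show ?thesis using measurable_cong[of P "\<lambda>\<omega>. \<omega> i" "\<lambda>_. undefined" L] by simp
  qed
  have "distr P (PiM I (\<lambda>_. L)) (\<lambda>x. \<lambda>i\<in>I. x i) = distr P P (\<lambda>x. x)"
    by (rule distr_cong) (auto simp: P_eq space_PiM PiE_def extensional_def restrict_def)
  also have "\<dots> = P" by simp
  also have "\<dots> = PiM I (\<lambda>i. distr P L (\<lambda>\<omega>. \<omega> i))"
    unfolding P_eq by (rule PiM_cong) (auto simp: pp.PiM_component)
  finally show ?thesis using P.indep_vars_iff_distr_eq_PiM[OF assms rv] by simp
qed

lemma prod_indep: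
  assumes I: "I \<noteq> {}" and E0: "E0 \<subseteq> I" and F: "F \<subseteq> I" "finite F" and EF: "E0 \<inter> F = {}"
    and X0: "X0 \<in> sets (PiM E0 (\<lambda>_. L))" and S: "\<And>e. e \<in> F \<Longrightarrow> S e \<in> sets borel"
  shows "measure P ({\<omega>\<in>space P. restrict \<omega> E0 \<in> X0} \<inter> {\<omega>\<in>space P. \<forall>e\<in>F. \<omega> e \<in> S e})
       = measure P {\<omega>\<in>space P. restrict \<omega> E0 \<in> X0} * (\<Prod>e\<in>F. measure L (S e))"
proof -
  interpret P: prob_space P by (rule prob_P)
  have iv: "P.indep_var (PiM E0 (\<lambda>_. L)) (\<lambda>\<omega>. restrict (\<lambda>i. \<omega> i) E0) (PiM F (\<lambda>_. L)) (\<lambda>\<omega>. restrict (\<lambda>i. \<omega> i) F)"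
    by (rule P.indep_var_restrict[OF indep_coords[OF I] EF E0 F(1)])
  have Y: "PiE F S \<in> sets (PiM F (\<lambda>_. L))" using F(2) S SL by (intro sets_PiM_I_finite) auto
  have eq1: "(\<lambda>x. (restrict (\<lambda>i. x i) E0, restrict (\<lambda>i. x i) F)) -` (X0 \<times> PiE F S) \<inter> space P
      = {\<omega>\<in>space P. restrict \<omega> E0 \<in> X0} \<inter> {\<omega>\<in>space P. \<forall>e\<in>F. \<omega> e \<in> S e}"
    by (auto simp: PiE_def Pi_def)
  have eq2: "(\<lambda>x. restrict (\<lambda>i. x i) E0) -` X0 \<inter> space P = {\<omega>\<in>space P. restrict \<omega> E0 \<in> X0}" by auto
  have eq3: "(\<lambda>x. restrict (\<lambda>i. x i) F) -` PiE F S \<inter> space P = {\<omega>\<in>space P. \<forall>e\<in>F. \<omega> e \<in> S e}"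
    by (auto simp: PiE_def Pi_def)
  have m3: "measure P {\<omega>\<in>space P. \<forall>e\<in>F. \<omega> e \<in> S e} = (\<Prod>e\<in>F. measure L (S e))"
  proof -
    have "{\<omega>\<in>space P. \<forall>e\<in>F. \<omega> e \<in> S e} = prod_emb I (\<lambda>_. L) F (PiE F S)"
      unfolding prod_emb_def P_eq using F by (auto simp: space_PiM Pi_iff)
    then show ?thesis unfolding P_eq using pp.measure_PiM_emb[OF F] S SL by auto
  qed
  show ?thesis using P.indep_varD[OF iv X0 Y] eq1 eq2 eq3 m3 by simp
qed

lemma local_repr:
  assumes A: "A \<in> sets P" and E0: "E0 \<subseteq> I"
    and loc: "\<And>\<omega> \<omega>'. \<omega> \<in> space P \<Longrightarrow> \<omega>' \<in> space P \<Longrightarrow> (\<forall>e\<in>E0. \<omega> e = \<omega>' e) \<Longrightarrow> \<omega> \<in> A \<longleftrightarrow> \<omega>' \<in> A"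
  shows "\<exists>X0 \<in> sets (PiM E0 (\<lambda>_. L)). A = {\<omega>\<in>space P. restrict \<omega> E0 \<in> X0}"
proof -
  interpret P: prob_space P by (rule prob_P)
  obtain w where w: "w \<in> space P" using P.not_empty by blast
  define ext where "ext x = (\<lambda>e. if e \<in> E0 then x e else w e)" for x :: "(nat \<Rightarrow> int) set \<Rightarrow> ennreal"
  have extm: "ext \<in> measurable (PiM E0 (\<lambda>_. L)) P"
    unfolding P_eq
  proof -
    have "(\<lambda>x e. (\<lambda>e x. if e \<in> E0 then x e else w e) e x) \<in> measurable (PiM E0 (\<lambda>_. L)) (PiM I (\<lambda>_. L))"
    proof (rule measurable_PiM_single')
      fix e assume "e \<in> I"
      show "(\<lambda>x. if e \<in> E0 then x e else w e) \<in> measurable (PiM E0 (\<lambda>_. L)) L"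
      proof (cases "e \<in> E0")
        case True
        then show ?thesis by (simp add: measurable_component_singleton)
      next
        case False
        then show ?thesis by (simp add: spaceL)
      qed
    next
      show "(\<lambda>x e. if e \<in> E0 then x e else w e) \<in> space (PiM E0 (\<lambda>_. L)) \<rightarrow> (\<Pi>\<^sub>E e\<in>I. space L)"
        using w E0 by (auto simp: space_PiM spaceL space_P PiE_def extensional_def)
    qed
    then show "ext \<in> measurable (PiM E0 (\<lambda>_. L)) (PiM I (\<lambda>_. L))" by (simp add: ext_def[abs_def])
  qed
  define X0 where "X0 = ext -` A \<inter> space (PiM E0 (\<lambda>_. L))"
  have X0s: "X0 \<in> sets (PiM E0 (\<lambda>_. L))" unfolding X0_def by (rule measurable_sets[OF extm A])
  have "A = {\<omega>\<in>space P. restrict \<omega> E0 \<in> X0}"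
  proof (intro set_eqI iffI)
    fix \<omega> assume \<omega>: "\<omega> \<in> A"
    then have sp: "\<omega> \<in> space P" using A sets.sets_into_space by blast
    have r: "restrict \<omega> E0 \<in> space (PiM E0 (\<lambda>_. L))" by (auto simp: space_PiM spaceL)
    have es: "ext (restrict \<omega> E0) \<in> space P" using measurable_space[OF extm r] .
    have "ext (restrict \<omega> E0) \<in> A" using loc[OF sp es] \<omega> by (auto simp: ext_def)
    then show "\<omega> \<in> {\<omega>\<in>space P. restrict \<omega> E0 \<in> X0}" using sp r by (auto simp: X0_def)
  next
    fix \<omega> assume \<omega>: "\<omega> \<in> {\<omega>\<in>space P. restrict \<omega> E0 \<in> X0}"
    then have sp: "\<omega> \<in> space P" and r: "restrict \<omega> E0 \<in> space (PiM E0 (\<lambda>_. L))" and ea: "ext (restrict \<omega> E0) \<in> A"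
      by (auto simp: X0_def)
    have es: "ext (restrict \<omega> E0) \<in> space P" using measurable_space[OF extm r] .
    show "\<omega> \<in> A" using loc[OF sp es] ea by (auto simp: ext_def)
  qed
  with X0s show ?thesis by blast
qed

lemma pos_event:
  assumes I: "I \<noteq> {}" and E0: "E0 \<subseteq> I" and F: "F \<subseteq> I" "finite F" and EF: "E0 \<inter> F = {}"
    and A: "A \<in> sets P" and loc: "\<And>\<omega> \<omega>'. \<omega> \<in> space P \<Longrightarrow> \<omega>' \<in> space P \<Longrightarrow> (\<forall>e\<in>E0. \<omega> e = \<omega>' e) \<Longrightarrow> \<omega> \<in> A \<longleftrightarrow> \<omega>' \<in> A"
    and Apos: "measure P A > 0"
    and S: "\<And>e. e \<in> F \<Longrightarrow> S e \<in> sets borel" and Spos: "\<And>e. e \<in> F \<Longrightarrow> measure L (S e) > 0"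
  shows "measure P (A \<inter> {\<omega>\<in>space P. \<forall>e\<in>F. \<omega> e \<in> S e}) > 0"
proof -
  obtain X0 where X0: "X0 \<in> sets (PiM E0 (\<lambda>_. L))" "A = {\<omega>\<in>space P. restrict \<omega> E0 \<in> X0}"
    using local_repr[OF A E0 loc] by blast
  have "measure P (A \<inter> {\<omega>\<in>space P. \<forall>e\<in>F. \<omega> e \<in> S e}) = measure P A * (\<Prod>e\<in>F. measure L (S e))"
    using prod_indep[OF I E0 F EF X0(1) S] X0(2) by simp
  moreover have "(\<Prod>e\<in>F. measure L (S e)) > 0" using Spos by (intro prod_pos) auto
  ultimately show ?thesis using Apos by simp
qed

lemma choose_piece:
  assumes A: "A \<in> sets P" "measure P A > 0" and J: "countable J" and G: "\<And>j. j \<in> J \<Longrightarrow> G j \<in> sets P"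
    and N: "N \<in> null_sets P" and cov: "A \<subseteq> (\<Union>j\<in>J. G j) \<union> N"
  shows "\<exists>j\<in>J. measure P (A \<inter> G j) > 0"
proof (rule ccontr)
  interpret P: prob_space P by (rule prob_P)
  assume "\<not> ?thesis"
  then have z: "\<And>j. j \<in> J \<Longrightarrow> measure P (A \<inter> G j) = 0" using measure_nonneg[of P] by (meson not_le order.antisym)
  have "\<And>j. j \<in> J \<Longrightarrow> A \<inter> G j \<in> null_sets P"
    using z A G by (auto simp: P.emeasure_eq_measure intro!: null_setsI)
  then have "(\<Union>j\<in>J. A \<inter> G j) \<in> null_sets P" using J by (intro null_sets_UN') auto
  then have U: "(\<Union>j\<in>J. A \<inter> G j) \<union> N \<in> null_sets P" using N by auto
  have "A \<subseteq> (\<Union>j\<in>J. A \<inter> G j) \<union> N" using cov by blast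
  then have "A \<in> null_sets P" using null_sets_subset[OF U A(1)] by blast
  then have "measure P A = 0" by (simp add: P.emeasure_eq_measure null_sets_def)
  with A show False by simp
qed

lemma passage_meas:
  assumes "\<And>k. Suc k < length \<pi> \<Longrightarrow> {\<pi> ! k, \<pi> ! Suc k} \<in> I"
  shows "(\<lambda>\<omega>. passage \<omega> \<pi>) \<in> borel_measurable P"
  unfolding passage_def by (rule borel_measurable_sum) (use assms in \<open>auto intro!: comp_meas\<close>)

lemma cyl_sets:
  assumes "F \<subseteq> I" "finite F" "\<And>e. e \<in> F \<Longrightarrow> S e \<in> sets borel"
  shows "{\<omega>\<in>space P. \<forall>e\<in>F. \<omega> e \<in> S e} \<in> sets P"
proof -
  have "{\<omega>\<in>space P. \<forall>e\<in>F. \<omega> e \<in> S e} = prod_emb I (\<lambda>_. L) F (PiE F S)"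
    unfolding prod_emb_def P_eq using assms by (auto simp: space_PiM Pi_iff)
  also have "\<dots> \<in> sets P" unfolding P_eq using assms SL by (intro sets_PiM_I) auto
  finally show ?thesis .
qed

end


lemma finite_Bx: "finite (Bx d lo hi)"
proof -
  have "Bx d lo hi \<subseteq> (\<lambda>f. (\<lambda>k. if k < d then f k else 0)) ` PiE {..<d} (\<lambda>k. {lo k..hi k})"
  proof
    fix x assume x: "x \<in> Bx d lo hi"
    have "x = (\<lambda>k. if k < d then restrict x {..<d} k else 0)"
      using x by (auto simp: Bx_def Zd_def)
    moreover have "restrict x {..<d} \<in> PiE {..<d} (\<lambda>k. {lo k..hi k})" using x by (auto simp: Bx_def)
    ultimately show "x \<in> (\<lambda>f. (\<lambda>k. if k < d then f k else 0)) ` PiE {..<d} (\<lambda>k. {lo k..hi k})" by blast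
  qed
  moreover have "finite (PiE {..<d} (\<lambda>k. {lo k..hi k}))" by (intro finite_PiE) auto
  ultimately show ?thesis using finite_subset by blast
qed

lemma finite_edges_of: "finite B \<Longrightarrow> finite (edges_of d B)"
  by (rule finite_subset[of _ "Pow B"]) (auto simp: edges_of_def)

lemma edges_of_mono: "B \<subseteq> B' \<Longrightarrow> edges_of d B \<subseteq> edges_of d B'"
  by (auto simp: edges_of_def)

lemma edge_mem: "e \<in> edges d \<Longrightarrow> \<exists>x y. e = {x, y} \<and> adj d x y"
  by (auto simp: edges_def)

locale asm = constr d Li N K R l a i s a' b j \<sigma> b' + fpp d L
  for d Li N K R l a i s a' b j \<sigma> b' L +
  fixes A0 :: "((nat \<Rightarrow> int) set \<Rightarrow> ennreal) set" and \<pi>0 n c inf r0 Ru Rv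
  assumes A0s: "A0 \<in> sets P"
    and A0loc: "\<And>\<omega> \<omega>'. \<omega> \<in> space P \<Longrightarrow> \<omega>' \<in> space P \<Longrightarrow> (\<forall>e\<in>edges_of d Q. \<omega> e = \<omega>' e) \<Longrightarrow> \<omega> \<in> A0 \<longleftrightarrow> \<omega>' \<in> A0"
    and pi0: "path_from d \<pi>0 a b" "set \<pi>0 \<subseteq> Q"
    and Apos: "measure P (A0 \<inter> ({\<omega>\<in>space P. passage \<omega> \<pi>0 < of_nat n} \<inter>
                 (if inf then space P else {\<omega>\<in>space P. \<forall>e\<in>edges_of d Q. \<omega> e \<in> {..of_nat n}}))) > 0"
    and cpos: "measure L {..of_nat c} > 0"
    and infpos: "inf \<Longrightarrow> measure L {\<infinity>} > 0"
    and fu: "\<not> inf \<Longrightarrow> unbounded_support L"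
    and r0: "\<not> inf \<Longrightarrow> ennreal (real ((length Ru + length Rv) * c + n) + 1) < ennreal r0 \<and> ennreal r0 \<in> law_support L \<and> 0 \<le> r0"
    and Ru: "path_from d Ru (pt (-l)) a'" "set Ru \<subseteq> C1"
    and Rv: "path_from d Rv b' (pt l)" "set Rv \<subseteq> C2"
begin

definition "E0 = edges_of d Q"
definition "G0 = {\<omega>\<in>space P. passage \<omega> \<pi>0 < of_nat n} \<inter>
                 (if inf then space P else {\<omega>\<in>space P. \<forall>e\<in>E0. \<omega> e \<in> {..of_nat n}})"
definition "A0' = A0 \<inter> G0"
definition "Ec = edges_of d C1 \<union> edges_of d C2 \<union> {{a, a'}, {b, b'}}"
definition "F = edges_of d Bl - E0"
definition "TB = real ((length Ru + length Rv) * c + n) + 1"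
definition "Sx e = (if e \<in> Ec then {..of_nat c} else if inf then {\<infinity>}
     else if e \<in> edges_of d (vboundary d Bl) then {ennreal TB<..} else {ennreal TB<..<ennreal (r0 + 1)})"
definition "Aev = A0' \<inter> {\<omega>\<in>space P. \<forall>e\<in>F. \<omega> e \<in> Sx e}"

lemma Apos': "measure P A0' > 0" unfolding A0'_def G0_def E0_def using Apos .

lemma E0I: "E0 \<subseteq> I" by (auto simp: E0_def edges_of_def)
lemma FI: "F \<subseteq> I" by (auto simp: F_def edges_of_def)
lemma finF: "finite F" unfolding F_def using finite_edges_of[OF finite_Bx] by blast
lemma finE0: "finite E0" unfolding E0_def using finite_edges_of[OF finite_Bx] by blast
lemma E0F: "E0 \<inter> F = {}" by (auto simp: F_def)
lemma Ine: "I \<noteq> {}"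
proof -
  have "adj d (pt 0) ((pt 0)(0 := pt 0 0 + 1))" by (rule adj_upd[OF pt_Zd[OF d0] d0]) simp
  then show ?thesis using adj_edge by blast
qed

lemma pi0_edges: "Suc k < length \<pi>0 \<Longrightarrow> {\<pi>0 ! k, \<pi>0 ! Suc k} \<in> E0"
proof -
  assume k: "Suc k < length \<pi>0"
  have "adj d (\<pi>0 ! k) (\<pi>0 ! Suc k)" by (rule path_adj[OF pi0(1) k])
  moreover have "\<pi>0 ! k \<in> Q" "\<pi>0 ! Suc k \<in> Q" using pi0(2) k by (auto dest: nth_mem)
  ultimately show ?thesis by (auto simp: E0_def edges_of_def edges_def)
qed

lemma G0s: "G0 \<in> sets P"
proof -
  have "(\<lambda>\<omega>. passage \<omega> \<pi>0) \<in> borel_measurable P"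
    by (rule passage_meas) (use pi0_edges E0I in blast)
  then have "{\<omega>\<in>space P. passage \<omega> \<pi>0 < of_nat n} \<in> sets P" by measurable
  moreover have "{\<omega>\<in>space P. \<forall>e\<in>E0. \<omega> e \<in> {..of_nat n}} \<in> sets P"
    by (rule cyl_sets[OF E0I finE0]) auto
  ultimately show ?thesis unfolding G0_def by auto
qed

lemma A0's: "A0' \<in> sets P" using A0s G0s by (simp add: A0'_def)

lemma passage_local:
  assumes "\<forall>e\<in>E0. \<omega> e = \<omega>' e"
  shows "passage \<omega> \<pi>0 = passage \<omega>' \<pi>0"
  unfolding passage_def using assms pi0_edges by (intro sum.cong) auto

lemma A0'loc: "\<omega> \<in> space P \<Longrightarrow> \<omega>' \<in> space P \<Longrightarrow> (\<forall>e\<in>E0. \<omega> e = \<omega>' e) \<Longrightarrow> \<omega> \<in> A0' \<longleftrightarrow> \<omega>' \<in> A0'"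
  using A0loc[of \<omega> \<omega>'] passage_local[of \<omega> \<omega>'] unfolding A0'_def G0_def E0_def by auto

lemma Sx_borel: "Sx e \<in> sets borel" by (auto simp: Sx_def)

lemma law_support_pos: "x \<in> law_support L \<Longrightarrow> open U \<Longrightarrow> x \<in> U \<Longrightarrow> U \<in> sets borel \<Longrightarrow> measure L U > 0"
proof -
  assume x: "x \<in> law_support L" "open U" "x \<in> U" "U \<in> sets borel"
  then have "emeasure L U > 0" by (auto simp: law_support_def)
  show "measure L U > 0" using \<open>emeasure L U > 0\<close> by (simp add: pp.M.emeasure_eq_measure)
qed

lemma unb_pos: "\<not> inf \<Longrightarrow> measure L {ennreal M<..} > 0"
proof -
  assume ni: "\<not> inf"
  obtain x where x: "x \<in> law_support L" "ennreal M < x" "x < \<infinity>" using fu[OF ni] by (auto simp: unbounded_support_def)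
  show ?thesis by (rule law_support_pos[OF x(1)]) (use x in auto)
qed

lemma Sx_pos: "measure L (Sx e) > 0"
proof -
  consider (c) "e \<in> Ec" | (i) "e \<notin> Ec" "inf" | (b) "e \<notin> Ec" "\<not> inf" "e \<in> edges_of d (vboundary d Bl)"
    | (o) "e \<notin> Ec" "\<not> inf" "e \<notin> edges_of d (vboundary d Bl)" by blast
  then show ?thesis
  proof cases
    case c
    then have "Sx e = {..of_nat c}" unfolding Sx_def by simp
    then show ?thesis using cpos by simp
  next
    case i
    then have "Sx e = {\<infinity>}" unfolding Sx_def by simp
    then show ?thesis using infpos i by simp
  next
    case b
    then have "Sx e = {ennreal TB<..}" unfolding Sx_def by simp
    then show ?thesis using unb_pos[of TB] b by simp
  next
    case o
    have r: "ennreal TB < ennreal r0" "ennreal r0 \<in> law_support L" "0 \<le> r0" using r0 o(2) by (auto simp: TB_def)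
    have "measure L {ennreal TB<..<ennreal (r0 + 1)} > 0"
      by (rule law_support_pos[OF r(2)]) (use r in \<open>auto simp: ennreal_lessI\<close>)
    moreover have "Sx e = {ennreal TB<..<ennreal (r0 + 1)}" unfolding Sx_def using o by simp
    ultimately show ?thesis by simp
  qed
qed

lemma Aev_pos: "measure P Aev > 0"
  unfolding Aev_def
  by (rule pos_event[OF Ine E0I FI finF E0F A0's A0'loc Apos' Sx_borel Sx_pos])

definition "rho = Ru @ \<pi>0 @ Rv"

lemma aa': "adj d a a'" and bb': "adj d b b'" using ex_props(8)[OF A] ex_props(8)[OF B] by auto
lemma aQ': "a \<in> Q" and bQ'': "b \<in> Q" using ex_props(5)[OF A] ex_props(5)[OF B] by auto
lemma a'C1: "a' \<in> C1" using a'S by (auto simp: C1_def)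
lemma b'C2: "b' \<in> C2" by (auto simp: C2_def)
lemma uC1: "pt (-l) \<in> C1" using pt_TU2 by (auto simp: C1_def)
lemma vC2: "pt l \<in> C2" using pt_TV1 pt_TV2 by (auto simp: C2_def)

lemma rho_path: "path_from d rho (pt (-l)) (pt l)"
  unfolding rho_def by (rule path_append3[OF Ru(1) pi0(1) Rv(1) adj_sym[OF aa'] bb'])

lemma rho_B: "set rho \<subseteq> Bl"
  using Ru(2) Rv(2) pi0(2) all_Bl by (auto simp: rho_def)

lemma Aev_F: "\<omega> \<in> Aev \<Longrightarrow> e \<in> F \<Longrightarrow> \<omega> e \<in> Sx e"
  by (auto simp: Aev_def)

lemma edge_in_F:
  assumes "adj d x y" "x \<in> Bl" "y \<in> Bl" "x \<notin> Q"
  shows "{x, y} \<in> F"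
  using assms by (auto simp: F_def E0_def edges_of_def edges_def)

lemma cheap_le:
  assumes "\<omega> \<in> Aev" "{x, y} \<in> Ec" "adj d x y" "x \<in> Bl" "y \<in> Bl" "x \<notin> Q"
  shows "\<omega> {x, y} \<le> of_nat c"
proof -
  have "\<omega> {x, y} \<in> Sx {x, y}" by (rule Aev_F[OF assms(1) edge_in_F[OF assms(3-6)]])
  then show ?thesis using assms(2) by (simp add: Sx_def)
qed

lemma path_cheap:
  assumes \<omega>: "\<omega> \<in> Aev" and p: "path_from d p x y" "set p \<subseteq> C"
    and C: "C = C1 \<or> C = C2"
  shows "passage \<omega> p \<le> of_nat (length p - 1) * of_nat c"
proof (rule passage_bound)
  fix k assume k: "Suc k < length p"
  have ad: "adj d (p ! k) (p ! Suc k)" by (rule path_adj[OF p(1) k])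
  have m: "p ! k \<in> C" "p ! Suc k \<in> C" using p(2) k by (auto dest: nth_mem)
  have "{p ! k, p ! Suc k} \<in> Ec" using C m ad by (auto simp: Ec_def edges_of_def edges_def)
  moreover have "p ! k \<in> Bl" "p ! Suc k \<in> Bl" using m C all_Bl by auto
  moreover have "p ! k \<notin> Q" using m C C1_Q C2_Q by auto
  ultimately show "\<omega> {p ! k, p ! Suc k} \<le> of_nat c" using cheap_le[OF \<omega> _ ad] by blast
qed

lemma rho_cost:
  assumes \<omega>: "\<omega> \<in> Aev"
  shows "passage \<omega> rho < ennreal TB"
proof -
  have Run: "Ru \<noteq> []" "Rv \<noteq> []" "\<pi>0 \<noteq> []" using Ru(1) Rv(1) pi0(1) by (auto simp: path_from_def is_path_def)
  have lasts: "last Ru = a'" "hd \<pi>0 = a" "last \<pi>0 = b" "hd Rv = b'"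
    using Ru(1) Rv(1) pi0(1) by (auto simp: path_from_def)
  have eq: "passage \<omega> rho = passage \<omega> Ru + \<omega> {a', a} + (passage \<omega> \<pi>0 + \<omega> {b, b'} + passage \<omega> Rv)"
    unfolding rho_def using Run lasts by (simp add: passage_append)
  have h1: "passage \<omega> Ru \<le> of_nat (length Ru - 1) * of_nat c" by (rule path_cheap[OF \<omega> Ru]) simp
  have h2: "passage \<omega> Rv \<le> of_nat (length Rv - 1) * of_nat c" by (rule path_cheap[OF \<omega> Rv]) simp
  have inB: "a \<in> Bl" "a' \<in> Bl" "b \<in> Bl" "b' \<in> Bl" using aQ' bQ'' a'C1 b'C2 all_Bl by auto
  have h3: "\<omega> {a', a} \<le> of_nat c"
    by (rule cheap_le[OF \<omega> _ adj_sym[OF aa'] inB(2,1)]) (use ex_props(7)[OF A] in \<open>auto simp: Ec_def insert_commute\<close>)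
  have h4: "\<omega> {b, b'} \<le> of_nat c"
  proof -
    have "\<omega> {b', b} \<le> of_nat c"
      by (rule cheap_le[OF \<omega> _ adj_sym[OF bb'] inB(4,3)]) (use ex_props(7)[OF B] in \<open>auto simp: Ec_def insert_commute\<close>)
    then show ?thesis by (simp add: insert_commute)
  qed
  have p0: "passage \<omega> \<pi>0 < of_nat n" using \<omega> by (auto simp: Aev_def A0'_def G0_def)
  have "passage \<omega> rho \<le> of_nat (length Ru - 1) * of_nat c + of_nat c + (passage \<omega> \<pi>0 + of_nat c + of_nat (length Rv - 1) * of_nat c)"
    unfolding eq by (intro add_mono h1 h2 h3 h4 order_refl)
  also have "\<dots> = of_nat ((length Ru + length Rv) * c) + passage \<omega> \<pi>0"
  proof -
    have eqn: "(length Ru - 1) * c + c + (c + (length Rv - 1) * c) = (length Ru + length Rv) * c"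
      using Run by (cases "length Ru"; cases "length Rv") (auto simp: algebra_simps)
    show ?thesis unfolding eqn[symmetric] by (simp add: ac_simps)
  qed
  also have "\<dots> < of_nat ((length Ru + length Rv) * c) + of_nat n"
    using p0 ennreal_of_nat_neq_top unfolding ennreal_add_left_cancel_less infinity_ennreal_def by blast
  also have "\<dots> = ennreal (real ((length Ru + length Rv) * c + n))"
    by (simp add: ennreal_of_nat_eq_real_of_nat)
  also have "\<dots> < ennreal TB" unfolding TB_def by (simp add: ennreal_lessI)
  finally show ?thesis .
qed

lemma expensive_ge:
  assumes "\<omega> \<in> Aev" "e \<in> F" "e \<notin> Ec"
  shows "ennreal TB \<le> \<omega> e"
proof -
  have "\<omega> e \<in> Sx e" by (rule Aev_F[OF assms(1,2)])
  then show ?thesis using assms(3) by (auto simp: Sx_def split: if_splits)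
qed

lemma opt_sub:
  assumes \<omega>: "\<omega> \<in> Aev" and opt: "optimal_in d \<omega> Bl (pt (-l)) (pt l) \<pi>"
  shows "has_subpath d \<pi> Q a b"
proof -
  have pp: "path_from d \<pi> (pt (-l)) (pt l)" "set \<pi> \<subseteq> Bl" using opt by (auto simp: optimal_in_def)
  have "passage \<omega> \<pi> \<le> passage \<omega> rho" using opt rho_path rho_B by (auto simp: optimal_in_def)
  then have pl: "passage \<omega> \<pi> < ennreal TB" using rho_cost[OF \<omega>] by simp
  define Rl where "Rl x y \<longleftrightarrow> {x, y} \<in> Ec \<or> {x, y} \<in> E0" for x y
  have succ: "successively Rl \<pi>"
    unfolding successively_conv_nth
  proof (intro allI impI)
    fix k assume k: "Suc k < length \<pi>"
    have ad: "adj d (\<pi> ! k) (\<pi> ! Suc k)" by (rule path_adj[OF pp(1) k])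
    have inB: "\<pi> ! k \<in> Bl" "\<pi> ! Suc k \<in> Bl" using pp(2) k by (auto dest: nth_mem)
    have le: "\<omega> {\<pi> ! k, \<pi> ! Suc k} < ennreal TB" using passage_ge_edge[OF k, of \<omega>] pl by simp
    show "Rl (\<pi> ! k) (\<pi> ! Suc k)"
    proof (rule ccontr)
      assume "\<not> ?thesis"
      then have n1: "{\<pi> ! k, \<pi> ! Suc k} \<notin> Ec" "{\<pi> ! k, \<pi> ! Suc k} \<notin> E0" by (auto simp: Rl_def)
      have "{\<pi> ! k, \<pi> ! Suc k} \<in> F" using n1(2) ad inB by (auto simp: F_def edges_of_def edges_def)
      from expensive_ge[OF \<omega> this n1(1)] le show False by simp
    qed
  qed
  have Rlc: "(x\<in>C1 \<and> y\<in>C1) \<or> (x\<in>C2 \<and> y\<in>C2) \<or> (x\<in>Q \<and> y\<in>Q) \<or>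
             (x = a \<and> y = a') \<or> (x = a' \<and> y = a) \<or> (x = b \<and> y = b') \<or> (x = b' \<and> y = b)" if "Rl x y" for x y
    using that unfolding Rl_def Ec_def E0_def edges_of_def by (auto simp: doubleton_eq_iff)
  have ne: "\<pi> \<noteq> []" "last \<pi> = pt l" "hd \<pi> = pt (-l)" using pp(1) by (auto simp: path_from_def is_path_def)
  obtain xs ys zs where w: "\<pi> = xs @ ys @ zs" "ys \<noteq> []" "hd ys = a" "last ys = b" "set ys \<subseteq> Q"
    using walk[OF C1_C2 C1_Q C2_Q aQ' a'C1 bQ'' b'C2 Rlc succ ne(1)] ne(2,3) uC1 vC2 by auto
  have "is_path d ys" using path_infix[of d xs ys zs] pp(1) w(1,2) by simp
  then show ?thesis using w unfolding has_subpath_def path_from_def by blast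
qed

lemma RL: "R = l - 3" using l by simp

lemma E0_Bin: "E0 \<subseteq> edges_of d Bin" unfolding E0_def by (rule edges_of_mono[OF Q_Bin])

lemma Ec_cases:
  assumes "e \<in> Ec"
  obtains (e12) x y where "e = {x, y}" "adj d x y" "(x \<in> C1 \<and> y \<in> C1) \<or> (x \<in> C2 \<and> y \<in> C2)"
    | (ea) "e = {a, a'}" | (eb) "e = {b, b'}"
  using assms unfolding Ec_def edges_of_def edges_def by auto

lemma bc:
  assumes inf: "inf" and \<omega>: "\<omega> \<in> Aev"
  shows "boundary_condition d \<omega> (\<lambda>_. 0) l"
  unfolding boundary_condition_def
proof
  fix e assume e: "e \<in> edges_of d (ball_inf d (\<lambda>_. 0) l) - edges_of d (ball_inf d (\<lambda>_. 0) (l - 3))"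
  then have eB: "e \<in> edges_of d Bl" and nBin: "e \<notin> edges_of d Bin" using RL by (auto simp: ball_eq)
  then have eF: "e \<in> F" using E0_Bin by (auto simp: F_def)
  have Sx: "\<omega> e \<in> Sx e" by (rule Aev_F[OF \<omega> eF])
  show "((e \<in> S_edges (\<lambda>_. 0) l \<or> e \<subseteq> line1 (\<lambda>_. 0)) \<and> \<omega> e < \<infinity>) \<or> \<omega> e = \<infinity>"
  proof (cases "e \<in> Ec")
    case False
    then have "Sx e = {\<infinity>}" unfolding Sx_def using inf by simp
    then show ?thesis using Sx by simp
  next
    case True
    have "Sx e = {..of_nat c}" unfolding Sx_def using True by simp
    then have "\<omega> e \<le> of_nat c" using Sx by simp
    then have fin: "\<omega> e < \<infinity>" using of_nat_less_top[of c] by (simp add: le_less_trans)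
    have eE: "e \<in> edges d" using eB by (auto simp: edges_of_def)
    have "e \<subseteq> line1 (\<lambda>_. 0)"
    proof (rule Ec_cases[OF True])
      fix x y assume xy: "e = {x, y}" "adj d x y" "x \<in> C1 \<and> y \<in> C1 \<or> x \<in> C2 \<and> y \<in> C2"
      have "\<not> (x \<in> Bin \<and> y \<in> Bin)" using nBin xy eE by (auto simp: edges_of_def)
      then show ?thesis using axis_edge[OF xy(3) xy(2)] xy(1) by auto
    next
      assume "e = {a, a'}"
      moreover have "a \<in> Bin" "a' \<in> Bin" using aQ' Q_Bin ex_props(6)[OF A] E1_Bin by auto
      ultimately show ?thesis using nBin eE by (auto simp: edges_of_def)
    next
      assume "e = {b, b'}"
      moreover have "b \<in> Bin" "b' \<in> Bin" using bQ'' Q_Bin ex_props(6)[OF B] E1_Bin by auto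
      ultimately show ?thesis using nBin eE by (auto simp: edges_of_def)
    qed
    with fin show ?thesis by simp
  qed
qed

abbreviation "Eb \<equiv> edges_of d (vboundary d Bl)"

lemma Eb_C: "edges_of d C1 \<inter> Eb = {}" "edges_of d C2 \<inter> Eb = {}"
proof -
  have False if e1: "e \<in> edges_of d C" and eb: "e \<in> Eb" and C: "C = C1 \<or> C = C2" for e C
  proof -
    obtain x y where xy: "e = {x, y}" "adj d x y" using e1 by (auto simp: edges_of_def edges_def)
    have "x \<in> vboundary d Bl" "y \<in> vboundary d Bl" "x \<in> C" "y \<in> C" using eb e1 xy(1) by (auto simp: edges_of_def)
    then have "x = y" using C C1_nb C2_nb by metis
    with adj_neq[OF xy(2)] show False by simp
  qed
  then show "edges_of d C1 \<inter> Eb = {}" "edges_of d C2 \<inter> Eb = {}" by blast+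
qed

lemma Eb_att: "{a, a'} \<notin> Eb" "{b, b'} \<notin> Eb"
proof -
  show "{a, a'} \<notin> Eb" using Bin_nb aQ' Q_Bin by (auto simp: edges_of_def)
  show "{b, b'} \<notin> Eb" using Bin_nb bQ'' Q_Bin by (auto simp: edges_of_def)
qed

lemma Eb_Ec: "Eb \<inter> Ec = {}"
  using Eb_C Eb_att unfolding Ec_def by blast

lemma Eb_F: "Eb \<subseteq> F"
proof
  fix e assume e: "e \<in> Eb"
  have eE: "e \<in> edges d" and sub: "e \<subseteq> vboundary d Bl" using e by (auto simp: edges_of_def)
  obtain x y where xy: "e = {x, y}" using edge_mem[OF eE] by blast
  have "x \<in> vboundary d Bl" using sub xy by auto
  then have "x \<notin> Q" using Bin_nb Q_Bin by blast
  then have "e \<notin> E0" using xy by (auto simp: E0_def edges_of_def)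
  moreover have "e \<in> edges_of d Bl" using eE sub by (auto simp: edges_of_def vboundary_def)
  ultimately show "e \<in> F" by (simp add: F_def)
qed

lemma AF3:
  assumes ni: "\<not> inf" and \<omega>: "\<omega> \<in> Aev" and e: "e \<in> edges_of d Bl - Eb"
  shows "\<omega> e \<le> ennreal (real n + real c + r0 + 1)"
proof -
  have r: "0 \<le> r0" using r0 ni by simp
  show ?thesis
  proof (cases "e \<in> E0")
    case True
    have "\<omega> \<in> G0" using \<omega> unfolding Aev_def A0'_def by simp
    then have "\<omega> \<in> {\<omega>\<in>space P. \<forall>e\<in>E0. \<omega> e \<in> {..of_nat n}}" unfolding G0_def using ni by simp
    then have "\<omega> e \<le> of_nat n" using True by simp
    also have "\<dots> \<le> ennreal (real n + real c + r0 + 1)" using r by (simp add: ennreal_of_nat_eq_real_of_nat)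
    finally show ?thesis .
  next
    case False
    then have eF: "e \<in> F" using e by (simp add: F_def)
    have Sx: "\<omega> e \<in> Sx e" by (rule Aev_F[OF \<omega> eF])
    show ?thesis
    proof (cases "e \<in> Ec")
      case True
      then have "Sx e = {..of_nat c}" unfolding Sx_def by simp
      then have "\<omega> e \<le> of_nat c" using Sx by simp
      also have "\<dots> \<le> ennreal (real n + real c + r0 + 1)" using r by (simp add: ennreal_of_nat_eq_real_of_nat)
      finally show ?thesis .
    next
      case False
      then have "Sx e = {ennreal TB<..<ennreal (r0 + 1)}" unfolding Sx_def using ni e by simp
      then have "\<omega> e < ennreal (r0 + 1)" using Sx by simp
      also have "\<dots> \<le> ennreal (real n + real c + r0 + 1)" by (intro ennreal_leI) simp
      finally show ?thesis by simp
    qed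
  qed
qed

lemma AF4:
  assumes ni: "\<not> inf"
  shows "measure P (Aev \<inter> {\<omega>. \<forall>e\<in>Eb. \<omega> e > ennreal M}) > 0"
proof -
  define S' where "S' e = (if e \<in> Eb then Sx e \<inter> {ennreal M<..} else Sx e)" for e
  have eq: "Aev \<inter> {\<omega>. \<forall>e\<in>Eb. \<omega> e > ennreal M} = A0' \<inter> {\<omega>\<in>space P. \<forall>e\<in>F. \<omega> e \<in> S' e}"
    using Eb_F by (auto simp: Aev_def S'_def)
  have S'b: "S' e \<in> sets borel" for e using Sx_borel[of e] by (auto simp: S'_def)
  have S'p: "measure L (S' e) > 0" for e
  proof (cases "e \<in> Eb")
    case True
    then have "e \<notin> Ec" using Eb_Ec by blast
    then have "S' e = {ennreal TB<..} \<inter> {ennreal M<..}" unfolding S'_def Sx_def using True ni by simp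
    also have "\<dots> = {ennreal (max TB M)<..}"
    proof (cases "TB \<le> M")
      case True
      then have "ennreal TB \<le> ennreal M" by (rule ennreal_leI)
      then show ?thesis using True by (auto simp: max_def intro: le_less_trans)
    next
      case False
      then have "ennreal M \<le> ennreal TB" by (intro ennreal_leI) simp
      then show ?thesis using False by (auto simp: max_def intro: le_less_trans)
    qed
    finally show ?thesis using unb_pos[OF ni, of "max TB M"] by simp
  next
    case False
    then show ?thesis using Sx_pos[of e] by (simp add: S'_def)
  qed
  show ?thesis unfolding eq
    by (rule pos_event[OF Ine E0I FI finF E0F A0's A0'loc Apos' S'b S'p])
qed

lemma Aev_sets: "Aev \<in> sets P"
  unfolding Aev_def using A0's cyl_sets[OF FI finF Sx_borel] by auto

lemma Aev_local: "local_event d L Bl Aev"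
  unfolding local_event_def
proof (intro conjI ballI impI)
  show "Aev \<in> sets P" by (rule Aev_sets)
  fix \<omega> \<omega>' assume w: "\<omega> \<in> space P" "\<omega>' \<in> space P" and ag: "\<forall>e\<in>edges_of d Bl. \<omega> e = \<omega>' e"
  have "E0 \<subseteq> edges_of d Bl" using E0_Bin edges_of_mono[OF Bin_Bl] by blast
  then have "\<omega> \<in> A0' \<longleftrightarrow> \<omega>' \<in> A0'" using A0'loc[OF w] ag by blast
  moreover have "F \<subseteq> edges_of d Bl" by (auto simp: F_def)
  then have "\<forall>e\<in>F. \<omega> e = \<omega>' e" using ag by blast
  then have "(\<forall>e\<in>F. \<omega> e \<in> Sx e) \<longleftrightarrow> (\<forall>e\<in>F. \<omega>' e \<in> Sx e)" by auto
  ultimately show "\<omega> \<in> Aev \<longleftrightarrow> \<omega>' \<in> Aev" using w unfolding Aev_def by blast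
qed

lemma l_pos: "0 < l" using l R K N0 by simp

lemma Bl_box: "is_box d Bl"
  unfolding is_box_def Bx_def using l_pos by (intro exI[of _ "\<lambda>_. -l"] exI[of _ "\<lambda>_. l"]) auto

lemma uv_bd: "pt (-l) \<in> vboundary d Bl" "pt l \<in> vboundary d Bl" "pt (-l) \<noteq> pt l"
proof -
  show "pt (-l) \<in> vboundary d Bl" by (rule pt_vboundary[OF d0]) (use l_pos in auto)
  show "pt l \<in> vboundary d Bl" by (rule pt_vboundary[OF d0]) (use l_pos in auto)
  show "pt (-l) \<noteq> pt l"
  proof
    assume "pt (-l) = pt l"
    then have "pt (-l) 0 = pt l 0" by simp
    with l_pos show False by (simp add: pt_def)
  qed
qed

lemma Aev_sub: "Aev \<subseteq> A0" by (auto simp: Aev_def A0'_def)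

end


lemma fin_bound:
  fixes f :: "'a \<Rightarrow> ennreal"
  assumes "finite E" "\<forall>e\<in>E. f e < \<infinity>"
  shows "\<exists>n::nat. \<forall>e\<in>E. f e \<le> of_nat n"
  using assms
proof (induction E rule: finite_induct)
  case empty then show ?case by simp
next
  case (insert x E)
  then obtain n where n: "\<forall>e\<in>E. f e \<le> of_nat n" by auto
  obtain m where m: "f x < of_nat m" using insert.prems ennreal_Ex_less_of_nat by auto
  have "\<forall>e\<in>insert x E. f e \<le> of_nat (max n m)"
  proof
    fix e assume "e \<in> insert x E"
    then show "f e \<le> of_nat (max n m)"
    proof
      assume "e = x"
      then show ?thesis using m by (meson less_imp_le max.cobounded2 of_nat_mono order.trans)
    next
      assume "e \<in> E"
      then show ?thesis using n by (meson max.cobounded1 of_nat_mono order.trans)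
    qed
  qed
  then show ?case by blast
qed

lemma vscale_pt: "vscale t (uvec 0) = pt t"
  by (auto simp: vscale_def uvec_def pt_def)

lemma box0_eq: "box0 d Ls = Bx d (\<lambda>_. 0) (\<lambda>k. if k < d then int (Ls k) else 0)"
  by (auto simp: box0_def Bx_def)

context fpp
begin

lemma exists_c:
  assumes "measure L {..<\<infinity>} > 0"
  shows "\<exists>c::nat. measure L {..of_nat c} > 0"
proof (rule ccontr)
  assume "\<not> ?thesis"
  then have z: "\<And>c::nat. measure L {..of_nat c} = 0" using measure_nonneg[of L] by (meson not_le order.antisym)
  have "\<And>c::nat. {..(of_nat c :: ennreal)} \<in> null_sets L"
    using z SL by (auto simp: pp.M.emeasure_eq_measure intro!: null_setsI)
  then have U: "(\<Union>c::nat. {..(of_nat c :: ennreal)}) \<in> null_sets L" by (intro null_sets_UN) auto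
  have "{..<\<infinity>} \<subseteq> (\<Union>c::nat. {..(of_nat c :: ennreal)})"
    using ennreal_Ex_less_of_nat by (auto intro: less_imp_le)
  then have "{..<(\<infinity>::ennreal)} \<in> null_sets L" using null_sets_subset[OF U] SL by auto
  then have "measure L {..<\<infinity>} = 0" by (simp add: pp.M.emeasure_eq_measure null_sets_def)
  with assms show False by simp
qed

end

theorem lemma2p4:
  fixes d :: nat and L :: "ennreal measure" and Ls :: "nat \<Rightarrow> nat"
    and u0 v0 :: "nat \<Rightarrow> int" and A0 :: "((nat \<Rightarrow> int) set \<Rightarrow> ennreal) set"
  assumes "d \<ge> 2"
    and "prob_space L" and "sets L = sets borel"
    and "useful d L"
    and "measure L {..<\<infinity>} > p_c d"
    and "measure L {\<infinity>} > 0 \<or> (measure L {\<infinity>} = 0 \<and> unbounded_support L)"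
    and "\<exists>i<d. Ls i > 0"
    and "valid_pattern d L (box0 d Ls) u0 v0 A0"
  shows "\<exists>B u v A. pattern d L B u v A
     \<and> box0 d Ls \<subseteq> B
     \<and> measure (FPP d L) A > 0
     \<and> (\<forall>\<omega>\<in>A. \<forall>\<pi>. optimal_in d \<omega> B u v \<pi> \<longrightarrow> has_subpath d \<pi> (box0 d Ls) u0 v0)
     \<and> A \<subseteq> A0
     \<and> (measure L {\<infinity>} > 0 \<longrightarrow>
          (\<exists>l::int. l \<ge> 3 \<and> B = ball_inf d (\<lambda>_. 0) l
             \<and> u = vscale (- l) (uvec 0) \<and> v = vscale l (uvec 0)
             \<and> (\<exists>TB::real. TB > 0 \<and> (\<exists>\<pi>. path_from d \<pi> u v \<and> set \<pi> \<subseteq> B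
                   \<and> (\<forall>\<omega>\<in>A. passage \<omega> \<pi> < ennreal TB)))
             \<and> (\<forall>\<omega>\<in>A. boundary_condition d \<omega> (\<lambda>_. 0) l)))
     \<and> (measure L {\<infinity>} = 0 \<and> unbounded_support L \<longrightarrow>
          (\<exists>l::int. l > 0 \<and> B = ball_inf d (\<lambda>_. 0) l
             \<and> u = vscale (- l) (uvec 0) \<and> v = vscale l (uvec 0)
             \<and> (\<exists>MB::real. \<forall>\<omega>\<in>A. \<forall>e \<in> edges_of d B - edges_of d (vboundary d B).
                   \<omega> e \<le> ennreal MB)
             \<and> (\<forall>M::real. M > 0 \<longrightarrow>
                   measure (FPP d L) (A \<inter> {\<omega>. \<forall>e \<in> edges_of d (vboundary d B). \<omega> e > ennreal M}) > 0)))"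
proof -
  have d2: "2 \<le> d" and PL: "prob_space L" and SL: "sets L = sets borel"
    and cases_h: "measure L {\<infinity>} > 0 \<or> (measure L {\<infinity>} = 0 \<and> unbounded_support L)"
    and vp: "valid_pattern d L (box0 d Ls) u0 v0 A0" using assms(1) assms(2) assms(3) assms(6) assms(8) by blast+
  define Li where "Li k = (if k < d then int (Ls k) else 0)" for k
  have Qeq: "box0 d Ls = Bx d (\<lambda>_. 0) Li" unfolding Li_def by (rule box0_eq)
  interpret geo d Li using d2 by unfold_locales (auto simp: Li_def)
  interpret fpp d L by (intro fpp.intro PL SL)
  have pat0: "pattern d L Q u0 v0 A0" and A0pos: "measure P A0 > 0"
    and paths: "\<forall>\<omega>\<in>A0. \<exists>\<pi>. path_from d \<pi> u0 v0 \<and> set \<pi> \<subseteq> Q \<and> passage \<omega> \<pi> < \<infinity>"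
    using vp[unfolded valid_pattern_def Qeq] by blast+
  have u0b: "u0 \<in> vboundary d Q" and v0b: "v0 \<in> vboundary d Q" and uv0: "u0 \<noteq> v0"
    and A0s: "A0 \<in> sets P"
    and A0loc: "\<And>\<omega> \<omega>'. \<omega> \<in> space P \<Longrightarrow> \<omega>' \<in> space P \<Longrightarrow> (\<forall>e\<in>edges_of d Q. \<omega> e = \<omega>' e) \<Longrightarrow> \<omega> \<in> A0 \<longleftrightarrow> \<omega>' \<in> A0"
    using pat0[unfolded pattern_def local_event_def] by blast+
  define isinf where "isinf \<longleftrightarrow> measure L {\<infinity>} > 0"
  have fuh: "\<not> isinf \<Longrightarrow> unbounded_support L \<and> measure L {\<infinity>} = 0" using cases_h by (auto simp: isinf_def)
  interpret P: prob_space P by (rule prob_P)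
  define E0 where "E0 = edges_of d Q"
  have finQ: "finite Q" by (rule finite_Bx)
  have finE0: "finite E0" unfolding E0_def by (rule finite_edges_of[OF finQ])
  have E0I: "E0 \<subseteq> I" by (auto simp: E0_def edges_of_def)
  define J where "J = {\<pi>. path_from d \<pi> u0 v0 \<and> set \<pi> \<subseteq> Q} \<times> (UNIV :: nat set)"
  define G where "G = (\<lambda>(\<pi>, n::nat). {\<omega>\<in>space P. passage \<omega> \<pi> < of_nat n} \<inter>
      (if isinf then space P else {\<omega>\<in>space P. \<forall>e\<in>E0. \<omega> e \<in> {..of_nat n}}))"
  define Nn where "Nn = (if isinf then {} else (\<Union>e\<in>E0. {\<omega>\<in>space P. \<omega> e \<in> {\<infinity>}}))"
  have cJ: "countable J"
  proof -
    have "J \<subseteq> lists Q \<times> (UNIV :: nat set)" by (auto simp: J_def)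
    moreover have "countable (lists Q \<times> (UNIV :: nat set))" using countable_finite[OF finQ] by auto
    ultimately show ?thesis by (rule countable_subset)
  qed
  have Gs: "G j \<in> sets P" if "j \<in> J" for j
  proof -
    obtain \<pi> m where jm1: "j = (\<pi>, m)" by (cases j)
    have jm2: "path_from d \<pi> u0 v0" using that jm1 by (auto simp: J_def)
    note jm = jm1 jm2
    have "(\<lambda>\<omega>. passage \<omega> \<pi>) \<in> borel_measurable P"
      by (rule passage_meas) (use path_adj[OF jm(2)] adj_edge in blast)
    then have "{\<omega>\<in>space P. passage \<omega> \<pi> < of_nat m} \<in> sets P" by measurable
    moreover have "{\<omega>\<in>space P. \<forall>e\<in>E0. \<omega> e \<in> {..of_nat m}} \<in> sets P"
      by (rule cyl_sets[OF E0I finE0]) auto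
    ultimately show ?thesis using jm by (auto simp: G_def)
  qed
  have Ns: "Nn \<in> null_sets P"
  proof (cases isinf)
    case True then show ?thesis by (simp add: Nn_def)
  next
    case False
    have "{\<omega>\<in>space P. \<omega> e \<in> {\<infinity>}} \<in> null_sets P" if "e \<in> E0" for e
    proof -
      have eI: "e \<in> I" using that E0I by auto
      have s: "{\<omega>\<in>space P. \<omega> e \<in> {\<infinity>}} \<in> sets P" using comp_meas[OF eI] by measurable
      have "measure P {\<omega>\<in>space P. \<omega> e \<in> {\<infinity>}} = measure L {\<infinity>}" by (rule marginal[OF eI]) simp
      also have "\<dots> = 0" using fuh[OF False] by simp
      finally show ?thesis using s by (auto simp: P.emeasure_eq_measure intro!: null_setsI)
    qed
    then have "(\<Union>e\<in>E0. {\<omega>\<in>space P. \<omega> e \<in> {\<infinity>}}) \<in> null_sets P"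
      using countable_finite[OF finE0] by (intro null_sets_UN') auto
    then show ?thesis using False by (simp add: Nn_def)
  qed
  have cov: "A0 \<subseteq> (\<Union>j\<in>J. G j) \<union> Nn"
  proof
    fix \<omega> assume w: "\<omega> \<in> A0"
    then have sp: "\<omega> \<in> space P" using A0s sets.sets_into_space by blast
    obtain \<pi> where \<pi>: "path_from d \<pi> u0 v0" "set \<pi> \<subseteq> Q" "passage \<omega> \<pi> < \<infinity>" using paths w by blast
    obtain n1 where n1: "passage \<omega> \<pi> < of_nat n1" using ennreal_Ex_less_of_nat \<pi>(3) by auto
    show "\<omega> \<in> (\<Union>j\<in>J. G j) \<union> Nn"
    proof (cases isinf)
      case True
      then have "\<omega> \<in> G (\<pi>, n1)" using sp n1 by (simp add: G_def)
      moreover have "(\<pi>, n1) \<in> J" using \<pi> by (simp add: J_def)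
      ultimately show ?thesis by blast
    next
      case False
      show ?thesis
      proof (cases "\<forall>e\<in>E0. \<omega> e < \<infinity>")
        case True
        obtain n2 where n2: "\<forall>e\<in>E0. \<omega> e \<le> of_nat n2" using fin_bound[OF finE0 True] by blast
        have "passage \<omega> \<pi> < of_nat (max n1 n2)" using n1 by (meson max.cobounded1 of_nat_mono order_less_le_trans)
        moreover have "\<forall>e\<in>E0. \<omega> e \<le> of_nat (max n1 n2)" using n2 by (meson max.cobounded2 of_nat_mono order.trans)
        ultimately have "\<omega> \<in> G (\<pi>, max n1 n2)" using sp False by (simp add: G_def)
        moreover have "(\<pi>, max n1 n2) \<in> J" using \<pi> by (simp add: J_def)
        ultimately show ?thesis by blast
      next
        case F2: False
        then obtain e where "e \<in> E0" "\<omega> e = \<infinity>" using top.not_eq_extremum by auto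
        then have "\<omega> \<in> Nn" using sp False by (auto simp: Nn_def)
        then show ?thesis by blast
      qed
    qed
  qed
  obtain j0 where j0: "j0 \<in> J" "measure P (A0 \<inter> G j0) > 0"
    using choose_piece[OF A0s A0pos cJ Gs Ns cov] by blast
  obtain \<pi>0 n where jn1: "j0 = (\<pi>0, n)" by (cases j0)
  have jn2: "path_from d \<pi>0 u0 v0" "set \<pi>0 \<subseteq> Q" using j0(1) jn1 by (auto simp: J_def)
  note jn = jn1 jn2
  have Apos: "measure P (A0 \<inter> ({\<omega>\<in>space P. passage \<omega> \<pi>0 < of_nat n} \<inter>
                 (if isinf then space P else {\<omega>\<in>space P. \<forall>e\<in>edges_of d Q. \<omega> e \<in> {..of_nat n}}))) > 0"
    using j0(2) unfolding jn(1) G_def E0_def by (simp only: prod.case)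
  have "measure L {..<\<infinity>} > 0"
  proof -
    have len: "Suc 0 < length \<pi>0" by (rule path_len2[OF jn(2) uv0])
    define e1 where "e1 = {\<pi>0 ! 0, \<pi>0 ! Suc 0}"
    have e1I: "e1 \<in> I" unfolding e1_def using path_adj[OF jn(2) len] adj_edge by blast
    have sub: "A0 \<inter> G j0 \<subseteq> {\<omega>\<in>space P. \<omega> e1 \<in> {..<\<infinity>}}"
    proof
      fix \<omega> assume w: "\<omega> \<in> A0 \<inter> G j0"
      then have "passage \<omega> \<pi>0 < of_nat n" "\<omega> \<in> space P" using jn(1) by (auto simp: G_def)
      moreover have "\<omega> e1 \<le> passage \<omega> \<pi>0" unfolding e1_def using passage_ge_edge[OF len] by simp
      ultimately show "\<omega> \<in> {\<omega>\<in>space P. \<omega> e1 \<in> {..<\<infinity>}}" using of_nat_less_top[of n]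
        by (auto intro: le_less_trans)
    qed
    have s1: "{\<omega>\<in>space P. \<omega> e1 \<in> {..<\<infinity>}} \<in> sets P" using comp_meas[OF e1I] by measurable
    have "measure P (A0 \<inter> G j0) \<le> measure P {\<omega>\<in>space P. \<omega> e1 \<in> {..<\<infinity>}}"
      by (rule P.finite_measure_mono[OF sub s1])
    also have "\<dots> = measure L {..<\<infinity>}" by (rule marginal[OF e1I]) simp
    finally show ?thesis using j0(2) by simp
  qed
  then obtain c :: nat where cpos: "measure L {..of_nat c} > 0" using exists_c by blast
  obtain i s where exA: "ex_pt d Li u0 i s (u0(i := fv Li i s))" using vboundary_exit[OF u0b] by blast
  obtain j \<sigma> where exB: "ex_pt d Li v0 j \<sigma> (v0(j := fv Li j \<sigma>))" using vboundary_exit[OF v0b] by blast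
  define a' where "a' = u0(i := fv Li i s)"
  define b' where "b' = v0(j := fv Li j \<sigma>)"
  define NN where "NN = (\<Sum>k<d. int (Ls k))"
  have Lb: "Li k \<le> NN" for k
  proof (cases "k < d")
    case True
    then show ?thesis unfolding Li_def NN_def by (auto intro: member_le_sum)
  next
    case False
    then show ?thesis unfolding Li_def NN_def by (auto intro: sum_nonneg)
  qed
  define K where "K = NN + 3"
  define R where "R = K + 3"
  define l where "l = R + 3"
  interpret constr d Li NN K R l u0 i s a' v0 j \<sigma> b'
    by unfold_locales (use Lb K_def R_def l_def exA exB uv0 a'_def b'_def in auto)
  obtain Ru where Ru: "path_from d Ru (pt (-l)) a'" "set Ru \<subseteq> C1"
    using conn_path[OF conn_sym[OF conn_C1]] pt_TU2 by (auto simp: C1_def)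
  obtain Rv where Rv: "path_from d Rv b' (pt l)" "set Rv \<subseteq> C2"
    using conn_path[OF conn_C2] by (auto simp: C2_def)
  define TB0 where "TB0 = real ((length Ru + length Rv) * c + n) + 1"
  obtain r0 where r0: "\<not> isinf \<Longrightarrow> ennreal TB0 < ennreal r0 \<and> ennreal r0 \<in> law_support L \<and> 0 \<le> r0"
  proof (cases isinf)
    case True then show ?thesis using that by blast
  next
    case False
    then obtain x where x: "x \<in> law_support L" "ennreal TB0 < x" "x < \<infinity>"
      using fuh by (auto simp: unbounded_support_def)
    then obtain r where "x = ennreal r" "0 \<le> r" using less_top_ennreal by auto
    then show ?thesis using that x by auto
  qed
  interpret asm d Li NN K R l u0 i s a' v0 j \<sigma> b' L A0 \<pi>0 n c isinf r0 Ru Rv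
  proof (unfold_locales)
    show "A0 \<in> sets P" by (rule A0s)
  next
    fix \<omega> \<omega>' show "\<omega> \<in> space P \<Longrightarrow> \<omega>' \<in> space P \<Longrightarrow> \<forall>e\<in>edges_of d Q. \<omega> e = \<omega>' e \<Longrightarrow> (\<omega> \<in> A0) = (\<omega>' \<in> A0)"
      by (rule A0loc)
  qed (use jn Apos cpos isinf_def fuh r0 TB0_def Ru Rv in auto)
  have ball: "ball_inf d (\<lambda>_. 0) l = Bl" by (rule ball_eq)
  have uu: "vscale (- l) (uvec 0) = pt (-l)" and vv: "vscale l (uvec 0) = pt l" by (rule vscale_pt)+
  show ?thesis
  proof (rule exI[of _ "ball_inf d (\<lambda>_. 0) l"], rule exI[of _ "vscale (- l) (uvec 0)"], rule exI[of _ "vscale l (uvec 0)"], rule exI[of _ Aev], intro conjI)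
    show "pattern d L (ball_inf d (\<lambda>_. 0) l) (vscale (- l) (uvec 0)) (vscale l (uvec 0)) Aev"
      unfolding ball uu vv pattern_def using Bl_box uv_bd Aev_local by auto
    show "box0 d Ls \<subseteq> ball_inf d (\<lambda>_. 0) l" unfolding ball Qeq using all_Bl(3) .
    show "measure P Aev > 0" by (rule Aev_pos)
    show "\<forall>\<omega>\<in>Aev. \<forall>\<pi>. optimal_in d \<omega> (ball_inf d (\<lambda>_. 0) l) (vscale (- l) (uvec 0)) (vscale l (uvec 0)) \<pi> \<longrightarrow> has_subpath d \<pi> (box0 d Ls) u0 v0"
      unfolding ball uu vv Qeq using opt_sub by blast
    show "Aev \<subseteq> A0" by (rule Aev_sub)
    show "measure L {\<infinity>} > 0 \<longrightarrow> (\<exists>l'::int. l' \<ge> 3 \<and> ball_inf d (\<lambda>_. 0) l = ball_inf d (\<lambda>_. 0) l'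
             \<and> vscale (- l) (uvec 0) = vscale (- l') (uvec 0) \<and> vscale l (uvec 0) = vscale l' (uvec 0)
             \<and> (\<exists>TB::real. TB > 0 \<and> (\<exists>\<pi>. path_from d \<pi> (vscale (- l) (uvec 0)) (vscale l (uvec 0)) \<and> set \<pi> \<subseteq> ball_inf d (\<lambda>_. 0) l
                   \<and> (\<forall>\<omega>\<in>Aev. passage \<omega> \<pi> < ennreal TB)))
             \<and> (\<forall>\<omega>\<in>Aev. boundary_condition d \<omega> (\<lambda>_. 0) l'))"
    proof
      assume "measure L {\<infinity>} > 0"
      then have ii: isinf by (simp add: isinf_def)
      have "l \<ge> 3" using l_pos l_def R_def K_def N0 by simp
      moreover have "TB > 0"
      proof -
        have "0 \<le> real ((length Ru + length Rv) * c + n)" by (rule of_nat_0_le_iff)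
        then show ?thesis unfolding TB_def by linarith
      qed
      moreover have "path_from d rho (pt (-l)) (pt l) \<and> set rho \<subseteq> Bl \<and> (\<forall>\<omega>\<in>Aev. passage \<omega> rho < ennreal TB)"
        using rho_path rho_B rho_cost by blast
      moreover have "\<forall>\<omega>\<in>Aev. boundary_condition d \<omega> (\<lambda>_. 0) l" using bc[OF ii] by blast
      ultimately have H: "l \<ge> 3 \<and> ball_inf d (\<lambda>_. 0) l = ball_inf d (\<lambda>_. 0) l
             \<and> vscale (- l) (uvec 0) = vscale (- l) (uvec 0) \<and> vscale l (uvec 0) = vscale l (uvec 0)
             \<and> (\<exists>TB::real. TB > 0 \<and> (\<exists>\<pi>. path_from d \<pi> (vscale (- l) (uvec 0)) (vscale l (uvec 0)) \<and> set \<pi> \<subseteq> ball_inf d (\<lambda>_. 0) l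
                   \<and> (\<forall>\<omega>\<in>Aev. passage \<omega> \<pi> < ennreal TB)))
             \<and> (\<forall>\<omega>\<in>Aev. boundary_condition d \<omega> (\<lambda>_. 0) l)"
        unfolding ball uu vv by blast
      then show "\<exists>l'::int. l' \<ge> 3 \<and> ball_inf d (\<lambda>_. 0) l = ball_inf d (\<lambda>_. 0) l'
             \<and> vscale (- l) (uvec 0) = vscale (- l') (uvec 0) \<and> vscale l (uvec 0) = vscale l' (uvec 0)
             \<and> (\<exists>TB::real. TB > 0 \<and> (\<exists>\<pi>. path_from d \<pi> (vscale (- l) (uvec 0)) (vscale l (uvec 0)) \<and> set \<pi> \<subseteq> ball_inf d (\<lambda>_. 0) l
                   \<and> (\<forall>\<omega>\<in>Aev. passage \<omega> \<pi> < ennreal TB)))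
             \<and> (\<forall>\<omega>\<in>Aev. boundary_condition d \<omega> (\<lambda>_. 0) l')"
        by blast
    qed
    show "measure L {\<infinity>} = 0 \<and> unbounded_support L \<longrightarrow> (\<exists>l'::int. l' > 0 \<and> ball_inf d (\<lambda>_. 0) l = ball_inf d (\<lambda>_. 0) l'
             \<and> vscale (- l) (uvec 0) = vscale (- l') (uvec 0) \<and> vscale l (uvec 0) = vscale l' (uvec 0)
             \<and> (\<exists>MB::real. \<forall>\<omega>\<in>Aev. \<forall>e \<in> edges_of d (ball_inf d (\<lambda>_. 0) l) - edges_of d (vboundary d (ball_inf d (\<lambda>_. 0) l)).
                   \<omega> e \<le> ennreal MB)
             \<and> (\<forall>M::real. M > 0 \<longrightarrow>
                   measure (FPP d L) (Aev \<inter> {\<omega>. \<forall>e \<in> edges_of d (vboundary d (ball_inf d (\<lambda>_. 0) l)). \<omega> e > ennreal M}) > 0))"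
    proof
      assume "measure L {\<infinity>} = 0 \<and> unbounded_support L"
      then have ni: "\<not> isinf" by (simp add: isinf_def)
      have "\<forall>\<omega>\<in>Aev. \<forall>e \<in> edges_of d Bl - Eb. \<omega> e \<le> ennreal (real n + real c + r0 + 1)"
        using AF3[OF ni] by blast
      moreover have "\<forall>M::real. M > 0 \<longrightarrow> measure P (Aev \<inter> {\<omega>. \<forall>e\<in>Eb. \<omega> e > ennreal M}) > 0"
        using AF4[OF ni] by blast
      ultimately have H: "l > 0 \<and> ball_inf d (\<lambda>_. 0) l = ball_inf d (\<lambda>_. 0) l
             \<and> vscale (- l) (uvec 0) = vscale (- l) (uvec 0) \<and> vscale l (uvec 0) = vscale l (uvec 0)
             \<and> (\<exists>MB::real. \<forall>\<omega>\<in>Aev. \<forall>e \<in> edges_of d (ball_inf d (\<lambda>_. 0) l) - edges_of d (vboundary d (ball_inf d (\<lambda>_. 0) l)).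
                   \<omega> e \<le> ennreal MB)
             \<and> (\<forall>M::real. M > 0 \<longrightarrow>
                   measure (FPP d L) (Aev \<inter> {\<omega>. \<forall>e \<in> edges_of d (vboundary d (ball_inf d (\<lambda>_. 0) l)). \<omega> e > ennreal M}) > 0)"
        unfolding ball uu vv using l_pos by blast
      then show "\<exists>l'::int. l' > 0 \<and> ball_inf d (\<lambda>_. 0) l = ball_inf d (\<lambda>_. 0) l'
             \<and> vscale (- l) (uvec 0) = vscale (- l') (uvec 0) \<and> vscale l (uvec 0) = vscale l' (uvec 0)
             \<and> (\<exists>MB::real. \<forall>\<omega>\<in>Aev. \<forall>e \<in> edges_of d (ball_inf d (\<lambda>_. 0) l) - edges_of d (vboundary d (ball_inf d (\<lambda>_. 0) l)).
                   \<omega> e \<le> ennreal MB)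
             \<and> (\<forall>M::real. M > 0 \<longrightarrow>
                   measure (FPP d L) (Aev \<inter> {\<omega>. \<forall>e \<in> edges_of d (vboundary d (ball_inf d (\<lambda>_. 0) l)). \<omega> e > ennreal M}) > 0)"
        by blast
    qed
  qed
qed


end
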